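(* Let $R$ be a valuation domain of cardinality $\aleph_1$ and $J/A$ a type with $J=\bigcup_{\nu<\omega_1} r_\nu^{-1}R$ as in the context. If $\Gamma'_R(J/A)\neq 0$, then there is a non-standard uniserial $R$-module of type $J/A$.
   Context: $R$ is a valuation domain with quotient field $Q\neq R$ and unit group $R^*$. Uniserial: submodules totally ordered. For $R$-submodules $A\subseteq J$ of $Q$, $J/A$ is uniserial; a uniserial module is standard if isomorphic to such a $J/A$, non-standard otherwise. For uniserial $U$ and $0\ne a\in U$, $\mathrm{Ann}(a)=\{r:ra=0\}$, $D(a)=\bigcup\{r^{-1}R: r\text{ divides }a\}$; $U$ has type $J/A$ if $J/A\cong D(a)/\mathrm{Ann}(a)$. Here $J=\bigcup_{\nu<\omega_1}r_\nu^{-1}R$, $r_\nu\ne0$, $r_\mu\mid r_\nu$ for $\mu<\nu$. For a limit $\delta<\omega_1$ let $\mathcal T^\delta_{J/A}=\{\langle u_\sigma:\sigma<\delta\rangle: u_\sigma\in R^*,\ u_\tau-u_\sigma\in r_\sigma A \text{ for all }\sigma<\tau<\delta\}$. An $\omega_1$-filtration of $R$ by subrings is an increasing chain $\{N_\alpha:\alpha<\omega_1\}$ of countable subrings with $R=\bigcup_\alpha N_\alpha$, $N_\alpha=\bigcup_{\beta<\alpha}N_\beta$ for limit $\alpha$, $R^*\cap N_\alpha$ equal to the unit group of $N_\alpha$, and $r_\nu\in N_\alpha\iff\nu<\alpha$. Fixing such a filtration, let $E'=\{\delta<\omega_1\text{ limit}: \exists\langle u_\sigma:\sigma<\delta\rangle\in\mathcal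 T^\delta_{J/A}\ \forall f\in R^*\ \exists\sigma<\delta\ \ u_\sigma f\notin N_\delta+r_\sigma A\}$. Subsets of $\omega_1$ are equivalent if they agree on a closed unbounded set; $\tilde E$ denotes the class of $E$, and $0$ the class of sets disjoint from a cub. $\Gamma'_R(J/A)=\tilde{E'}$ (independent of the choices of $r_\nu$ and filtration). *)

theory Defs
  imports Main "HOL-Computational_Algebra.Fraction_Field" "HOL-Library.Countable_Set"
begin

text \<open>R is the type 'a (an integral domain); its quotient field Q is 'a fract,
  R embedded via x \<mapsto> Fraction_Field.Fract x 1.\<close>

definition valuation_domain :: "'a::idom itself \<Rightarrow> bool" where
  "valuation_domain _ \<longleftrightarrow> (\<forall>a b::'a. a dvd b \<or> b dvd a)"

definition not_field_of_fractions :: "'a::idom itself \<Rightarrow> bool" where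
  "not_field_of_fractions _ \<longleftrightarrow> (\<exists>q::'a fract. q \<notin> range (\<lambda>x. Fraction_Field.Fract x 1))"

definition emb :: "'a::idom \<Rightarrow> 'a fract" where
  "emb x = Fraction_Field.Fract x 1"

definition Q_submodule :: "'a::idom fract set \<Rightarrow> bool" where
  "Q_submodule S \<longleftrightarrow> 0 \<in> S \<and> (\<forall>x\<in>S. \<forall>y\<in>S. x + y \<in> S)
      \<and> (\<forall>r. \<forall>x\<in>S. emb r * x \<in> S)"

definition inv_R :: "'a::idom \<Rightarrow> 'a fract set" where
  "inv_R r = {Fraction_Field.Fract s r | s. True}"

definition scal :: "'a::idom \<Rightarrow> 'a fract set \<Rightarrow> 'a fract set" where
  "scal r A = {emb r * x | x. x \<in> A}"

record ('a, 'm) rmod =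
  mcarrier :: "'m set"
  madd :: "'m \<Rightarrow> 'm \<Rightarrow> 'm"
  mzero :: "'m"
  msmul :: "'a \<Rightarrow> 'm \<Rightarrow> 'm"

definition is_rmodule :: "('a::comm_ring_1, 'm) rmod \<Rightarrow> bool" where
  "is_rmodule M \<longleftrightarrow>
     mzero M \<in> mcarrier M
   \<and> (\<forall>x\<in>mcarrier M. \<forall>y\<in>mcarrier M. madd M x y \<in> mcarrier M)
   \<and> (\<forall>r. \<forall>x\<in>mcarrier M. msmul M r x \<in> mcarrier M)
   \<and> (\<forall>x\<in>mcarrier M. \<forall>y\<in>mcarrier M. \<forall>z\<in>mcarrier M.
         madd M (madd M x y) z = madd M x (madd M y z))
   \<and> (\<forall>x\<in>mcarrier M. \<forall>y\<in>mcarrier M. madd M x y = madd M y x)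
   \<and> (\<forall>x\<in>mcarrier M. madd M (mzero M) x = x)
   \<and> (\<forall>x\<in>mcarrier M. \<exists>y\<in>mcarrier M. madd M x y = mzero M)
   \<and> (\<forall>r. \<forall>x\<in>mcarrier M. \<forall>y\<in>mcarrier M.
         msmul M r (madd M x y) = madd M (msmul M r x) (msmul M r y))
   \<and> (\<forall>r s. \<forall>x\<in>mcarrier M. msmul M (r + s) x = madd M (msmul M r x) (msmul M s x))
   \<and> (\<forall>r s. \<forall>x\<in>mcarrier M. msmul M (r * s) x = msmul M r (msmul M s x))
   \<and> (\<forall>x\<in>mcarrier M. msmul M 1 x = x)"

definition is_submodule :: "'n set \<Rightarrow> ('a::comm_ring_1, 'n) rmod \<Rightarrow> bool" where
  "is_submodule N M \<longleftrightarrow> N \<subseteq> mcarrier M \<and> mzero M \<in> N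
     \<and> (\<forall>x\<in>N. \<forall>y\<in>N. madd M x y \<in> N) \<and> (\<forall>r. \<forall>x\<in>N. msmul M r x \<in> N)"

definition uniserial :: "('a::comm_ring_1, 'm) rmod \<Rightarrow> bool" where
  "uniserial M \<longleftrightarrow> is_rmodule M \<and>
     (\<forall>N1 N2. is_submodule N1 M \<and> is_submodule N2 M \<longrightarrow> N1 \<subseteq> N2 \<or> N2 \<subseteq> N1)"

definition rmod_iso :: "('a::comm_ring_1, 'm) rmod \<Rightarrow> ('a, 'n) rmod \<Rightarrow> bool" where
  "rmod_iso M N \<longleftrightarrow> (\<exists>f. bij_betw f (mcarrier M) (mcarrier N)
     \<and> (\<forall>x\<in>mcarrier M. \<forall>y\<in>mcarrier M. f (madd M x y) = madd N (f x) (f y))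
     \<and> (\<forall>r. \<forall>x\<in>mcarrier M. f (msmul M r x) = msmul N r (f x)))"

definition qmod :: "'a::idom fract set \<Rightarrow> 'a fract set \<Rightarrow> ('a, 'a fract set) rmod" where
  "qmod J A = \<lparr> mcarrier = {(\<lambda>a. x + a) ` A | x. x \<in> J},
                madd = (\<lambda>X Y. {x + y | x y. x \<in> X \<and> y \<in> Y}),
                mzero = A,
                msmul = (\<lambda>r X. {emb r * x + a | x a. x \<in> X \<and> a \<in> A}) \<rparr>"

definition standard :: "('a::idom, 'm) rmod \<Rightarrow> bool" where
  "standard M \<longleftrightarrow> (\<exists>J A. Q_submodule J \<and> Q_submodule A \<and> A \<subseteq> J \<and> rmod_iso M (qmod J A))"

definition Ann :: "('a::idom, 'm) rmod \<Rightarrow> 'm \<Rightarrow> 'a set" where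
  "Ann M a = {r. msmul M r a = mzero M}"

definition Dset :: "('a::idom, 'm) rmod \<Rightarrow> 'm \<Rightarrow> 'a fract set" where
  "Dset M a = \<Union> {inv_R r | r. \<exists>b\<in>mcarrier M. msmul M r b = a}"

definition has_type :: "('a::idom, 'm) rmod \<Rightarrow> 'a fract set \<Rightarrow> 'a fract set \<Rightarrow> bool" where
  "has_type M J A \<longleftrightarrow> (\<exists>a\<in>mcarrier M. a \<noteq> mzero M \<and>
      rmod_iso (qmod J A) (qmod (Dset M a) (emb ` Ann M a)))"

text \<open>A well-ordered type of order type omega_1: uncountable, all proper initial
  segments countable.\<close>
definition omega1_type :: "'w::wellorder itself \<Rightarrow> bool" where
  "omega1_type _ \<longleftrightarrow> \<not> countable (UNIV :: 'w set) \<and> (\<forall>w::'w. countable {x. x < w})"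

definition limit_pt :: "'w::wellorder \<Rightarrow> bool" where
  "limit_pt d \<longleftrightarrow> (\<exists>b. b < d) \<and> (\<forall>b<d. \<exists>c. b < c \<and> c < d)"

definition club :: "'w::wellorder set \<Rightarrow> bool" where
  "club C \<longleftrightarrow> (\<forall>a. \<exists>b\<in>C. a < b)
      \<and> (\<forall>d. limit_pt d \<and> (\<forall>b<d. \<exists>c\<in>C. b < c \<and> c < d) \<longrightarrow> d \<in> C)"

text \<open>The class of E is not 0: E is not disjoint from any club (E is stationary).\<close>
definition nonzero_class :: "'w::wellorder set \<Rightarrow> bool" where
  "nonzero_class E \<longleftrightarrow> (\<forall>C. club C \<longrightarrow> E \<inter> C \<noteq> {})"

definition countable_subring :: "'a::comm_ring_1 set \<Rightarrow> bool" where
  "countable_subring N \<longleftrightarrow> countable N \<and> 0 \<in> N \<and> 1 \<in> N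
     \<and> (\<forall>x\<in>N. \<forall>y\<in>N. x + y \<in> N \<and> x - y \<in> N \<and> x * y \<in> N)"

definition omega1_filtration :: "('w::wellorder \<Rightarrow> 'a::idom set) \<Rightarrow> ('w \<Rightarrow> 'a) \<Rightarrow> bool" where
  "omega1_filtration N r \<longleftrightarrow>
     (\<forall>a. countable_subring (N a))
   \<and> (\<forall>a b. a \<le> b \<longrightarrow> N a \<subseteq> N b)
   \<and> (\<Union>a. N a) = UNIV
   \<and> (\<forall>a. limit_pt a \<longrightarrow> N a = (\<Union>b\<in>{b. b < a}. N b))
   \<and> (\<forall>a. {x \<in> N a. x dvd 1} = {x \<in> N a. \<exists>y\<in>N a. x * y = 1})
   \<and> (\<forall>v a. r v \<in> N a \<longleftrightarrow> v < a)"

definition Tseq :: "('w::wellorder \<Rightarrow> 'a::idom) \<Rightarrow> 'a fract set \<Rightarrow> 'w \<Rightarrow> ('w \<Rightarrow> 'a) \<Rightarrow> bool" where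
  "Tseq r A d u \<longleftrightarrow> (\<forall>s<d. u s dvd 1)
      \<and> (\<forall>s t. s < t \<and> t < d \<longrightarrow> emb (u t - u s) \<in> scal (r s) A)"

definition Eprime :: "('w::wellorder \<Rightarrow> 'a::idom) \<Rightarrow> ('w \<Rightarrow> 'a set) \<Rightarrow> 'a fract set \<Rightarrow> 'w set" where
  "Eprime r N A = {d. limit_pt d \<and> (\<exists>u. Tseq r A d u \<and>
      (\<forall>f. f dvd 1 \<longrightarrow> (\<exists>s<d. emb (u s * f) \<notin> {emb n + y | n y. n \<in> N d \<and> y \<in> scal (r s) A})))}"

end

theory Submission
  imports Defs
begin

lemma emb_add[simp]: "emb (a + b) = emb a + emb (b::'a::idom)"
  by (simp add: emb_def)
lemma emb_mult[simp]: "emb (a * b) = emb a * emb (b::'a::idom)"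
  by (simp add: emb_def)
lemma emb_diff[simp]: "emb (a - b) = emb a - emb (b::'a::idom)"
  by (simp add: emb_def)
lemma emb_minus[simp]: "emb (- a) = - emb (a::'a::idom)"
  by (simp add: emb_def)
lemma emb_0[simp]: "emb (0::'a::idom) = 0"
  by (simp add: emb_def fract_collapse)
lemma emb_1[simp]: "emb (1::'a::idom) = 1"
  by (simp add: emb_def fract_collapse)
lemma emb_inj[simp]: "emb a = emb b \<longleftrightarrow> a = (b::'a::idom)"
  by (simp add: emb_def eq_fract)
lemma emb_eq0[simp]: "emb a = 0 \<longleftrightarrow> a = (0::'a::idom)"
  using emb_inj[of a 0] by simp
lemma Fract_emb: "b \<noteq> 0 \<Longrightarrow> Fraction_Field.Fract a b = emb a / emb (b::'a::idom)"
  by (simp add: emb_def)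

lemma unit_mult2: fixes a b :: "'a::idom" shows "a dvd 1 \<Longrightarrow> b dvd 1 \<Longrightarrow> a*b dvd 1"
  using mult_dvd_mono[of a 1 b 1] by simp

lemma valuation_Q:
  assumes "valuation_domain TYPE('a::idom)"
  shows "\<exists>p. (q::'a fract) = emb p \<or> (q \<noteq> 0 \<and> inverse q = emb p)"
proof (cases q)
  case (Fract a b)
  from assms have "a dvd b \<or> b dvd a" unfolding valuation_domain_def by blast
  then show ?thesis
  proof
    assume "a dvd b"
    then obtain k where k: "b = a * k" by auto
    show ?thesis
    proof (cases "a = 0")
      case True then show ?thesis using Fract by (intro exI[of _ 0]) (simp add: fract_collapse)
    next
      case False
      then have "inverse q = emb k" using Fract k by (simp add: emb_def eq_fract)
      moreover have "q \<noteq> 0" using Fract False by (simp add: Zero_fract_def eq_fract)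
      ultimately show ?thesis by blast
    qed
  next
    assume "b dvd a"
    then obtain k where k: "a = b * k" by auto
    then have "q = emb k" using Fract by (simp add: emb_def eq_fract)
    then show ?thesis by blast
  qed
qed

lemma QsubD:
  assumes "Q_submodule A"
  shows "0 \<in> A" "x \<in> A \<Longrightarrow> y \<in> A \<Longrightarrow> x + y \<in> A" "x \<in> A \<Longrightarrow> emb k * x \<in> A"
    "x \<in> A \<Longrightarrow> - x \<in> A" "x \<in> A \<Longrightarrow> y \<in> A \<Longrightarrow> x - y \<in> A"
proof -
  show "0 \<in> A" "x \<in> A \<Longrightarrow> y \<in> A \<Longrightarrow> x + y \<in> A" "x \<in> A \<Longrightarrow> emb k * x \<in> A"
    using assms unfolding Q_submodule_def by auto
  show neg: "x \<in> A \<Longrightarrow> - x \<in> A" for x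
    using assms unfolding Q_submodule_def by (metis emb_minus emb_1 mult_minus1)
  show "x \<in> A \<Longrightarrow> y \<in> A \<Longrightarrow> x - y \<in> A"
    using assms neg[of y] unfolding Q_submodule_def by (metis diff_conv_add_uminus)
qed

lemma Qsub_unit:
  assumes "Q_submodule A" "u * v = (1::'a::idom)" "emb u * x \<in> A"
  shows "x \<in> A"
proof -
  have "emb v * (emb u * x) \<in> A" using QsubD(3)[OF assms(1) assms(3)] .
  moreover have "emb v * (emb u * x) = x" using assms(2)
    by (metis emb_1 emb_mult mult.assoc mult.commute mult_1)
  ultimately show ?thesis by simp
qed

lemma nonunit_quot:
  assumes val: "valuation_domain TYPE('a::idom)" and A: "Q_submodule A"
    and q: "q \<notin> A" and a: "a \<in> A"
  shows "\<exists>p. a = emb p * (q::'a fract) \<and> \<not> p dvd 1"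
proof -
  have q0: "q \<noteq> 0" using q QsubD(1)[OF A] by auto
  obtain p where "a / q = emb p \<or> (a / q \<noteq> 0 \<and> inverse (a / q) = emb p)"
    using valuation_Q[OF val] by blast
  then show ?thesis
  proof
    assume h: "a / q = emb p"
    then have ap: "a = emb p * q" using q0 by (simp add: field_simps)
    have "\<not> p dvd 1"
    proof
      assume "p dvd 1"
      then obtain v where "1 = p * v" by auto
      then have "q = emb v * a" using ap by (metis emb_1 emb_mult mult.assoc mult.commute mult_1)
      then show False using q QsubD(3)[OF A a] by simp
    qed
    then show ?thesis using ap by blast
  next
    assume h: "a / q \<noteq> 0 \<and> inverse (a / q) = emb p"
    then have "q = emb p * a" using q0 by (simp add: divide_eq_eq)
    then show ?thesis using q QsubD(3)[OF A a] by simp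
  qed
qed

locale umod_setup =
  fixes r :: "'w::wellorder \<Rightarrow> 'a::idom" and A :: "'a fract set" and e :: "'w \<Rightarrow> 'w \<Rightarrow> 'a"
  assumes val: "valuation_domain TYPE('a)"
  and rnz: "\<And>v. r v \<noteq> 0" and rdvd: "\<And>m v. m < v \<Longrightarrow> r m dvd r v" and QA: "Q_submodule A"
  and e_refl: "\<And>m. e m m = 1" and e_unit: "\<And>m s. m \<le> s \<Longrightarrow> e m s dvd 1"
  and e_coh: "\<And>m k s. m \<le> k \<Longrightarrow> k \<le> s \<Longrightarrow> (emb (e m k * e k s) - emb (e m s)) / emb (r m) \<in> A"
begin

abbreviation ceq :: "'a fract \<Rightarrow> 'a fract \<Rightarrow> bool" where "ceq a b \<equiv> a - b \<in> A"

lemma ceq_refl: "a = b \<Longrightarrow> ceq a b" using QsubD(1)[OF QA] by simp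
lemma ceq_sym: "ceq a b \<Longrightarrow> ceq b a" using QsubD(4)[OF QA, of "a - b"] by simp
lemma ceq_trans: "ceq a b \<Longrightarrow> ceq b c \<Longrightarrow> ceq a c" using QsubD(2)[OF QA, of "a - b" "b - c"] by simp
lemma ceq_add: "ceq a b \<Longrightarrow> ceq c d \<Longrightarrow> ceq (a + c) (b + d)"
  using QsubD(2)[OF QA, of "a - b" "c - d"] by (simp add: algebra_simps)
lemma ceq_mult: "ceq a b \<Longrightarrow> ceq (emb k * a) (emb k * b)"
  using QsubD(3)[OF QA, of "a - b" k] by (simp add: algebra_simps)

definition t :: "'w \<Rightarrow> 'w \<Rightarrow> 'a" where "t m s = (SOME k. r s = r m * k)"

lemma r_t: assumes "m \<le> s" shows "r s = r m * t m s"
proof -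
  have "\<exists>k. r s = r m * k"
    using rdvd[of m s] assms by (cases "m = s") (auto simp: order_le_less intro: exI[of _ 1])
  then show ?thesis unfolding t_def by (rule someI_ex)
qed

lemma t_nz: "m \<le> s \<Longrightarrow> t m s \<noteq> 0"
  using r_t[of m s] rnz[of s] by auto

definition coord :: "'w \<Rightarrow> 'w \<times> 'a \<Rightarrow> 'a fract" where
  "coord s x = emb (snd x * e (fst x) s) / emb (r (fst x))"

lemma L1:
  assumes "fst x \<le> s" "s \<le> u"
  shows "ceq (coord u x) (emb (e s u) * coord s x)"
proof -
  have h: "(emb (e (fst x) s * e s u) - emb (e (fst x) u)) / emb (r (fst x)) \<in> A"
    using e_coh assms by blast
  have "emb (-1) * (emb (snd x) * ((emb (e (fst x) s * e s u) - emb (e (fst x) u)) / emb (r (fst x)))) \<in> A"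
    using QsubD(3)[OF QA, OF QsubD(3)[OF QA h]] by blast
  moreover have "emb (-1) * (emb (snd x) * ((emb (e (fst x) s * e s u) - emb (e (fst x) u)) / emb (r (fst x))))
     = coord u x - emb (e s u) * coord s x"
    using rnz[of "fst x"] by (simp add: coord_def field_simps)
  ultimately show ?thesis by simp
qed

definition rel :: "'w \<times> 'a \<Rightarrow> 'w \<times> 'a \<Rightarrow> bool" where
  "rel x y \<longleftrightarrow> ceq (coord (max (fst x) (fst y)) x) (coord (max (fst x) (fst y)) y)"

lemma unit_inv: "m \<le> s \<Longrightarrow> \<exists>v. e m s * v = 1"
  using e_unit[of m s] by (metis dvdE)

lemma L2:
  assumes "fst x \<le> s" "fst y \<le> s"
  shows "rel x y \<longleftrightarrow> ceq (coord s x) (coord s y)"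
proof -
  define m where "m = max (fst x) (fst y)"
  have ms: "m \<le> s" using assms m_def by simp
  have hx: "ceq (coord s x) (emb (e m s) * coord m x)" using L1[of x m s] ms m_def by simp
  have hy: "ceq (coord s y) (emb (e m s) * coord m y)" using L1[of y m s] ms m_def by simp
  have eq: "coord s x - coord s y = (coord s x - emb (e m s) * coord m x) - (coord s y - emb (e m s) * coord m y)
     + emb (e m s) * (coord m x - coord m y)" by (simp add: algebra_simps)
  show ?thesis
  proof
    assume "rel x y"
    then have "coord m x - coord m y \<in> A" unfolding rel_def m_def by simp
    then show "ceq (coord s x) (coord s y)"
      using eq hx hy QsubD(2,3,5)[OF QA] by metis
  next
    assume h: "ceq (coord s x) (coord s y)"
    have "emb (e m s) * (coord m x - coord m y) = (coord s x - coord s y) - (coord s x - emb (e m s) * coord m x) + (coord s y - emb (e m s) * coord m y)"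
      using eq by (simp add: algebra_simps)
    then have "emb (e m s) * (coord m x - coord m y) \<in> A"
      using h hx hy QsubD(2,5)[OF QA] by metis
    moreover obtain v where "e m s * v = 1" using unit_inv ms by blast
    ultimately have "coord m x - coord m y \<in> A" using Qsub_unit[OF QA] by blast
    then show "rel x y" unfolding rel_def m_def by simp
  qed
qed

lemma rel_refl: "rel x x" unfolding rel_def by (rule ceq_refl) simp
lemma rel_sym: "rel x y \<Longrightarrow> rel y x" unfolding rel_def by (metis ceq_sym max.commute)
lemma rel_trans: assumes "rel x y" "rel y z" shows "rel x z"
proof -
  define s where "s = max (fst x) (max (fst y) (fst z))"
  have "ceq (coord s x) (coord s y)" "ceq (coord s y) (coord s z)"
    using assms L2[of x s y] L2[of y s z] s_def by (auto simp: le_max_iff_disj)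
  then show ?thesis using L2[of x s z] s_def ceq_trans by (auto simp: le_max_iff_disj)
qed

definition lift :: "'w \<times> 'a \<Rightarrow> 'w \<Rightarrow> 'w \<times> 'a" where
  "lift x s = (s, snd x * t (fst x) s * e (fst x) s)"

lemma coord_lift: assumes "fst x \<le> s" shows "coord s (lift x s) = coord s x"
proof -
  have "r s = r (fst x) * t (fst x) s" using r_t assms by blast
  then show ?thesis using rnz[of "fst x"] t_nz[OF assms]
    by (simp add: coord_def lift_def e_refl field_simps)
qed

lemma rel_lift: assumes "fst x \<le> s" shows "rel (lift x s) x"
  using L2[of "lift x s" s x] coord_lift[OF assms] assms ceq_refl by (simp add: lift_def)

lemma coord_add2: "coord u (s, a + b) = coord u (s, a) + coord u (s, b)"
  by (simp add: coord_def add_divide_distrib distrib_right)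
lemma coord_mult2: "coord u (s, k * a) = emb k * coord u (s, a)"
  by (simp add: coord_def)
lemma coord_zero2: "coord u (s, 0) = 0"
  by (simp add: coord_def)

definition add :: "'w \<times> 'a \<Rightarrow> 'w \<times> 'a \<Rightarrow> 'w \<times> 'a" where
  "add x y = (max (fst x) (fst y), snd (lift x (max (fst x) (fst y))) + snd (lift y (max (fst x) (fst y))))"

definition smul :: "'a \<Rightarrow> 'w \<times> 'a \<Rightarrow> 'w \<times> 'a" where
  "smul k x = (fst x, k * snd x)"

definition zlev :: 'w where "zlev = (LEAST x. True)"
lemma zlev_le: "zlev \<le> s" unfolding zlev_def by (rule Least_le) simp

definition zer :: "'w \<times> 'a" where "zer = (zlev, 0)"

lemma fst_add[simp]: "fst (add x y) = max (fst x) (fst y)" by (simp add: add_def)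
lemma fst_smul[simp]: "fst (smul k x) = fst x" by (simp add: smul_def)
lemma fst_zer[simp]: "fst zer = zlev" by (simp add: zer_def)

lemma coord_add:
  assumes "fst x \<le> u" "fst y \<le> u"
  shows "ceq (coord u (add x y)) (coord u x + coord u y)"
proof -
  define m where "m = max (fst x) (fst y)"
  have "coord u (add x y) = coord u (lift x m) + coord u (lift y m)"
    unfolding add_def m_def[symmetric] using coord_add2[of u m] by (simp add: lift_def)
  moreover have "ceq (coord u (lift x m)) (coord u x)"
    using rel_lift[of x m] L2[of "lift x m" u x] assms m_def by (simp add: lift_def)
  moreover have "ceq (coord u (lift y m)) (coord u y)"
    using rel_lift[of y m] L2[of "lift y m" u y] assms m_def by (simp add: lift_def)
  ultimately show ?thesis using ceq_add by simp
qed

lemma coord_smul: "coord u (smul k x) = emb k * coord u x"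
  by (cases x) (simp add: smul_def coord_mult2)

lemma coord_zer: "coord u zer = 0" by (simp add: zer_def coord_zero2)

end

context umod_setup begin

definition cls :: "'w \<times> 'a \<Rightarrow> ('w \<times> 'a) set" where "cls x = {y. rel y x}"
definition rep :: "('w \<times> 'a) set \<Rightarrow> 'w \<times> 'a" where "rep X = (SOME y. y \<in> X)"

definition Umod :: "('a, ('w \<times> 'a) set) rmod" where
  "Umod = \<lparr> mcarrier = range cls, madd = (\<lambda>X Y. cls (add (rep X) (rep Y))),
            mzero = cls zer, msmul = (\<lambda>k X. cls (smul k (rep X))) \<rparr>"

lemma cls_eq: "cls x = cls y \<longleftrightarrow> rel x y"
proof
  assume "cls x = cls y"
  then have "x \<in> cls y" using rel_refl[of x] by (auto simp: cls_def)
  then show "rel x y" by (simp add: cls_def)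
next
  assume "rel x y"
  then show "cls x = cls y" unfolding cls_def using rel_trans rel_sym by blast
qed

lemma rep_rel: "rel (rep (cls x)) x"
proof -
  have "x \<in> cls x" using rel_refl by (simp add: cls_def)
  then have "rep (cls x) \<in> cls x" unfolding rep_def by (rule someI)
  then show ?thesis by (simp add: cls_def)
qed

lemma relI: "fst x \<le> s \<Longrightarrow> fst y \<le> s \<Longrightarrow> ceq (coord s x) (coord s y) \<Longrightarrow> rel x y"
  using L2 by blast

lemma relD: "rel x y \<Longrightarrow> fst x \<le> s \<Longrightarrow> fst y \<le> s \<Longrightarrow> ceq (coord s x) (coord s y)"
  using L2 by blast

lemma add_resp:
  assumes "rel x x'" "rel y y'" shows "rel (add x y) (add x' y')"
proof -
  define s where "s = max (max (fst x) (fst y)) (max (fst x') (fst y'))"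
  have le: "fst x \<le> s" "fst y \<le> s" "fst x' \<le> s" "fst y' \<le> s" by (auto simp: s_def le_max_iff_disj)
  have "ceq (coord s (add x y)) (coord s x + coord s y)" using coord_add le by blast
  moreover have "ceq (coord s x + coord s y) (coord s x' + coord s y')"
    using ceq_add relD[OF assms(1)] relD[OF assms(2)] le by blast
  moreover have "ceq (coord s (add x' y')) (coord s x' + coord s y')" using coord_add le by blast
  ultimately have "ceq (coord s (add x y)) (coord s (add x' y'))" using ceq_trans ceq_sym by blast
  then show ?thesis using relI[of "add x y" s "add x' y'"] le by simp
qed

lemma smul_resp:
  assumes "rel x x'" shows "rel (smul k x) (smul k x')"
proof -
  define s where "s = max (fst x) (fst x')"
  have le: "fst x \<le> s" "fst x' \<le> s" by (auto simp: s_def)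
  have "ceq (coord s (smul k x)) (coord s (smul k x'))"
    unfolding coord_smul using ceq_mult relD[OF assms] le by blast
  then show ?thesis using relI le by simp
qed

lemma madd_cls[simp]: "madd Umod (cls x) (cls y) = cls (add x y)"
  unfolding Umod_def using add_resp[OF rep_rel rep_rel] by (simp add: cls_eq)

lemma msmul_cls[simp]: "msmul Umod k (cls x) = cls (smul k x)"
  unfolding Umod_def using smul_resp[OF rep_rel] by (simp add: cls_eq)

lemma mzero_U[simp]: "mzero Umod = cls zer" by (simp add: Umod_def)
lemma mcarrier_U[simp]: "mcarrier Umod = range cls" by (simp add: Umod_def)

lemma Umod_is_rmodule: "is_rmodule Umod"
proof -
  have assoc: "cls (add (add x y) z) = cls (add x (add y z))" for x y z
  proof -
    define s where "s = max (fst x) (max (fst y) (fst z))"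
    have le: "fst x \<le> s" "fst y \<le> s" "fst z \<le> s" by (auto simp: s_def le_max_iff_disj)
    have "ceq (coord s (add (add x y) z)) (coord s (add x y) + coord s z)" using coord_add le by simp
    moreover have "ceq (coord s (add x y) + coord s z) ((coord s x + coord s y) + coord s z)"
      using ceq_add[OF coord_add[OF le(1,2)] ceq_refl] by simp
    moreover have "ceq (coord s (add x (add y z))) (coord s x + coord s (add y z))" using coord_add le by simp
    moreover have "ceq (coord s x + coord s (add y z)) (coord s x + (coord s y + coord s z))"
      using ceq_add[OF ceq_refl coord_add[OF le(2,3)]] by simp
    ultimately have "ceq (coord s (add (add x y) z)) (coord s (add x (add y z)))"
      using ceq_trans ceq_sym by (metis add.assoc)
    then show ?thesis using relI le cls_eq by (simp add: le_max_iff_disj)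
  qed
  have comm: "cls (add x y) = cls (add y x)" for x y
  proof -
    define s where "s = max (fst x) (fst y)"
    have le: "fst x \<le> s" "fst y \<le> s" by (auto simp: s_def)
    have "ceq (coord s (add x y)) (coord s (add y x))"
      using coord_add[OF le] coord_add[OF le(2,1)] ceq_trans ceq_sym by (metis add.commute)
    then show ?thesis using relI le cls_eq by (simp add: le_max_iff_disj)
  qed
  have zl: "cls (add zer x) = cls x" for x
  proof -
    define s where "s = fst x"
    have le: "fst zer \<le> s" "fst x \<le> s" by (auto simp: s_def zlev_le)
    have "ceq (coord s (add zer x)) (coord s x)"
      using coord_add[OF le] by (simp add: coord_zer)
    then show ?thesis using relI le cls_eq by (simp add: le_max_iff_disj)
  qed
  have inv: "cls (add x (smul (-1) x)) = cls zer" for x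
  proof -
    define s where "s = fst x"
    have le: "fst zer \<le> s" "fst x \<le> s" by (auto simp: s_def zlev_le)
    have "ceq (coord s (add x (smul (-1) x))) (coord s zer)"
      using coord_add[OF le(2), of "smul (-1) x"] le by (simp add: coord_zer coord_smul)
    then show ?thesis using relI le cls_eq by (simp add: le_max_iff_disj)
  qed
  have d1: "cls (smul k (add x y)) = cls (add (smul k x) (smul k y))" for k x y
  proof -
    define s where "s = max (fst x) (fst y)"
    have le: "fst x \<le> s" "fst y \<le> s" by (auto simp: s_def)
    have "ceq (coord s (smul k (add x y))) (emb k * (coord s x + coord s y))"
      unfolding coord_smul using ceq_mult[OF coord_add[OF le]] .
    moreover have "ceq (coord s (add (smul k x) (smul k y))) (emb k * coord s x + emb k * coord s y)"
      using coord_add[of "smul k x" s "smul k y"] le by (simp add: coord_smul)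
    ultimately have "ceq (coord s (smul k (add x y))) (coord s (add (smul k x) (smul k y)))"
      using ceq_trans ceq_sym by (metis distrib_left)
    then show ?thesis using relI le cls_eq by (simp add: le_max_iff_disj)
  qed
  have d2: "cls (smul (k + l) x) = cls (add (smul k x) (smul l x))" for k l x
  proof -
    define s where "s = fst x"
    have le: "fst x \<le> s" by (auto simp: s_def)
    have "ceq (coord s (add (smul k x) (smul l x))) (emb k * coord s x + emb l * coord s x)"
      using coord_add[of "smul k x" s "smul l x"] le by (simp add: coord_smul)
    then have "ceq (coord s (smul (k + l) x)) (coord s (add (smul k x) (smul l x)))"
      using ceq_sym by (simp add: coord_smul distrib_right)
    then show ?thesis using relI le cls_eq by (simp add: le_max_iff_disj)
  qed
  have d3: "smul (k * l) x = smul k (smul l x)" for k l x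
    by (simp add: smul_def mult.assoc)
  have d4: "smul 1 x = x" for x by (simp add: smul_def)
  have i1: "\<forall>x\<in>mcarrier Umod. \<exists>y\<in>mcarrier Umod. madd Umod x y = mzero Umod"
  proof
    fix X assume "X \<in> mcarrier Umod"
    then obtain x where "X = cls x" by auto
    then show "\<exists>y\<in>mcarrier Umod. madd Umod X y = mzero Umod"
      using inv[of x] by (intro bexI[of _ "cls (smul (-1) x)"]) auto
  qed
  have i2: "\<forall>x\<in>mcarrier Umod. \<forall>y\<in>mcarrier Umod. \<forall>z\<in>mcarrier Umod.
         madd Umod (madd Umod x y) z = madd Umod x (madd Umod y z)"
    by (auto simp: assoc)
  have i3: "\<forall>x\<in>mcarrier Umod. \<forall>y\<in>mcarrier Umod. madd Umod x y = madd Umod y x"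
    using comm by auto
  show ?thesis unfolding is_rmodule_def
    using i1 i2 i3 by (auto simp: zl d1 d2 d3 d4)
qed

end

lemma uniserialI:
  assumes "is_rmodule M"
    and "\<And>x y. x \<in> mcarrier M \<Longrightarrow> y \<in> mcarrier M \<Longrightarrow> (\<exists>k. y = msmul M k x) \<or> (\<exists>k. x = msmul M k y)"
  shows "uniserial M"
  unfolding uniserial_def
proof (intro conjI assms(1) allI impI)
  fix N1 N2 assume h: "is_submodule N1 M \<and> is_submodule N2 M"
  show "N1 \<subseteq> N2 \<or> N2 \<subseteq> N1"
  proof (rule ccontr)
    assume "\<not> (N1 \<subseteq> N2 \<or> N2 \<subseteq> N1)"
    then obtain x y where x: "x \<in> N1" "x \<notin> N2" and y: "y \<in> N2" "y \<notin> N1" by auto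
    have c: "x \<in> mcarrier M" "y \<in> mcarrier M" using h x y unfolding is_submodule_def by auto
    from assms(2)[OF c] show False
      using h x y unfolding is_submodule_def by auto
  qed
qed

lemma unit_add_nonunit:
  assumes val: "valuation_domain TYPE('a::idom)" and u: "u dvd (1::'a)" and p: "\<not> p dvd 1"
  shows "(u + p) dvd 1"
proof (rule ccontr)
  assume np: "\<not> (u + p) dvd 1"
  have "\<not> (- p) dvd 1" using p by simp
  have "(u + p) dvd (- p) \<or> (- p) dvd (u + p)" using val unfolding valuation_domain_def by blast
  then show False
  proof
    assume "(u + p) dvd (- p)"
    then obtain k where k: "- p = (u + p) * k" by (meson dvdE)
    have e1: "(u + p) * (1 + k) = (u + p) + (u + p) * k" by (simp add: algebra_simps)
    then have "u = (u + p) * (1 + k)" using k[symmetric] by simp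
    then have "(u + p) dvd u" by (metis dvd_triv_left)
    then show False using np u dvd_trans by blast
  next
    assume "(- p) dvd (u + p)"
    then obtain k where "u + p = (- p) * k" by (meson dvdE)
    then have "u = p * (- k - 1)" by (simp add: algebra_simps)
    then have "p dvd u" by (metis dvd_triv_left)
    then show False using p u dvd_trans by blast
  qed
qed

lemma coset_eq:
  assumes "Q_submodule A"
  shows "((\<lambda>a. x + a) ` A = (\<lambda>a. y + a) ` A) \<longleftrightarrow> x - y \<in> A"
proof
  assume h: "(\<lambda>a. x + a) ` A = (\<lambda>a. y + a) ` A"
  have "x + 0 \<in> (\<lambda>a. x + a) ` A" using QsubD(1)[OF assms] by blast
  then have "x \<in> (\<lambda>a. y + a) ` A" using h by simp
  then obtain a where "a \<in> A" "x = y + a" by auto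
  then show "x - y \<in> A" by simp
next
  assume h: "x - y \<in> A"
  show "(\<lambda>a. x + a) ` A = (\<lambda>a. y + a) ` A"
  proof (intro set_eqI iffI)
    fix z assume "z \<in> (\<lambda>a. x + a) ` A"
    then obtain a where a: "a \<in> A" "z = x + a" by auto
    then have "(x - y) + a \<in> A" using QsubD(2)[OF assms h] by simp
    moreover have "z = y + ((x - y) + a)" using a by simp
    ultimately show "z \<in> (\<lambda>a. y + a) ` A" by blast
  next
    fix z assume "z \<in> (\<lambda>a. y + a) ` A"
    then obtain a where a: "a \<in> A" "z = y + a" by auto
    then have "a - (x - y) \<in> A" using QsubD(5)[OF assms _ h] by simp
    moreover have "z = x + (a - (x - y))" using a by simp
    ultimately show "z \<in> (\<lambda>a. x + a) ` A" by blast
  qed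
qed

lemma msmul_coset:
  assumes "Q_submodule A"
  shows "msmul (qmod J A) k ((\<lambda>a. x + a) ` A) = (\<lambda>a. emb k * x + a) ` A"
proof (intro set_eqI iffI)
  fix z assume "z \<in> msmul (qmod J A) k ((\<lambda>a. x + a) ` A)"
  then obtain a b where ab: "a \<in> A" "b \<in> A" "z = emb k * (x + a) + b" by (auto simp: qmod_def)
  then have "emb k * a + b \<in> A" using QsubD(2,3)[OF assms] by blast
  moreover have "z = emb k * x + (emb k * a + b)" using ab by (simp add: algebra_simps)
  ultimately show "z \<in> (\<lambda>a. emb k * x + a) ` A" by blast
next
  fix z assume "z \<in> (\<lambda>a. emb k * x + a) ` A"
  then obtain b where b: "b \<in> A" "z = emb k * x + b" by auto
  have "x \<in> (\<lambda>a. x + a) ` A" using QsubD(1)[OF assms] by (intro image_eqI[of x _ 0]) auto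
  then have "z \<in> {emb k * x' + a | x' a. x' \<in> (\<lambda>a. x + a) ` A \<and> a \<in> A}" using b by blast
  then show "z \<in> msmul (qmod J A) k ((\<lambda>a. x + a) ` A)" unfolding qmod_def by simp
qed

lemma qmod_scale_iso:
  assumes "l \<noteq> (0::'a::idom fract)"
  shows "rmod_iso (qmod J A) (qmod ((\<lambda>x. l * x) ` J) ((\<lambda>x. l * x) ` A))"
proof -
  let ?f = "\<lambda>X. (\<lambda>x. l * x) ` X"
  have injl: "inj (\<lambda>x. l * x)" using assms by (auto intro: injI)
  have im: "?f ((\<lambda>a. x + a) ` A) = (\<lambda>a. l * x + a) ` ?f A" for x
    by (simp add: image_image distrib_left)
  have car1: "mcarrier (qmod J A) = {(\<lambda>a. x + a) ` A | x. x \<in> J}" by (simp add: qmod_def)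
  have car2: "mcarrier (qmod (?f J) (?f A)) = {(\<lambda>a. x + a) ` ?f A | x. x \<in> ?f J}" by (simp add: qmod_def)
  have bij: "bij_betw ?f (mcarrier (qmod J A)) (mcarrier (qmod (?f J) (?f A)))"
    unfolding bij_betw_def
  proof
    show "inj_on ?f (mcarrier (qmod J A))"
      using injl by (auto intro!: inj_onI simp: inj_image_eq_iff)
    show "?f ` mcarrier (qmod J A) = mcarrier (qmod (?f J) (?f A))"
    proof (intro set_eqI iffI)
      fix Z assume "Z \<in> ?f ` mcarrier (qmod J A)"
      then obtain x where "x \<in> J" "Z = ?f ((\<lambda>a. x + a) ` A)" unfolding car1 by blast
      then show "Z \<in> mcarrier (qmod (?f J) (?f A))" unfolding car2 im by blast
    next
      fix Z assume "Z \<in> mcarrier (qmod (?f J) (?f A))"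
      then obtain x where "x \<in> J" "Z = (\<lambda>a. l * x + a) ` ?f A" unfolding car2 by blast
      then have "Z = ?f ((\<lambda>a. x + a) ` A)" "(\<lambda>a. x + a) ` A \<in> mcarrier (qmod J A)"
        unfolding im car1 by blast+
      then show "Z \<in> ?f ` mcarrier (qmod J A)" by blast
    qed
  qed
  have hadd: "?f (madd (qmod J A) X Y) = madd (qmod (?f J) (?f A)) (?f X) (?f Y)" for X Y
  proof (intro set_eqI iffI)
    fix z assume "z \<in> ?f (madd (qmod J A) X Y)"
    then obtain x y where "x \<in> X" "y \<in> Y" "z = l * (x + y)" by (auto simp: qmod_def)
    then have "z = l * x + l * y" "l * x \<in> ?f X" "l * y \<in> ?f Y" by (auto simp: distrib_left)
    then show "z \<in> madd (qmod (?f J) (?f A)) (?f X) (?f Y)" by (auto simp: qmod_def)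
  next
    fix z assume "z \<in> madd (qmod (?f J) (?f A)) (?f X) (?f Y)"
    then obtain x y where "x \<in> X" "y \<in> Y" "z = l * x + l * y" by (auto simp: qmod_def)
    then have "z = l * (x + y)" "x + y \<in> madd (qmod J A) X Y" by (auto simp: distrib_left qmod_def)
    then show "z \<in> ?f (madd (qmod J A) X Y)" by blast
  qed
  have hsm: "?f (msmul (qmod J A) k X) = msmul (qmod (?f J) (?f A)) k (?f X)" for k X
  proof (intro set_eqI iffI)
    fix z assume "z \<in> ?f (msmul (qmod J A) k X)"
    then obtain x a where "x \<in> X" "a \<in> A" "z = l * (emb k * x + a)" by (auto simp: qmod_def)
    then have "z = emb k * (l * x) + l * a" "l * x \<in> ?f X" "l * a \<in> ?f A" by (auto simp: algebra_simps)
    then show "z \<in> msmul (qmod (?f J) (?f A)) k (?f X)" by (auto simp: qmod_def)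
  next
    fix z assume "z \<in> msmul (qmod (?f J) (?f A)) k (?f X)"
    then obtain x a where "x \<in> X" "a \<in> A" "z = emb k * (l * x) + l * a" by (auto simp: qmod_def)
    then have "z = l * (emb k * x + a)" "emb k * x + a \<in> msmul (qmod J A) k X" by (auto simp: algebra_simps qmod_def)
    then show "z \<in> ?f (msmul (qmod J A) k X)" by blast
  qed
  show ?thesis unfolding rmod_iso_def using bij hadd hsm by blast
qed

context umod_setup begin

lemma smul_pair[simp]: "smul k (s, c) = (s, k * c)" by (simp add: smul_def)

lemma F1: "msmul Umod k (cls (s, c)) = cls (s, k * c)"
  by (simp add: smul_def)

lemma coord_self: "coord s (s, c) = emb c / emb (r s)"
  by (simp add: coord_def e_refl)

lemma F2: "cls (s, c) = cls zer \<longleftrightarrow> emb c / emb (r s) \<in> A"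
proof -
  have "cls (s, c) = cls zer \<longleftrightarrow> ceq (coord s (s, c)) (coord s zer)"
    using L2[of "(s,c)" s zer] zlev_le by (simp add: cls_eq)
  then show ?thesis by (simp add: coord_self coord_zer)
qed

lemma F3: "m \<le> s \<Longrightarrow> cls (m, c) = cls (s, c * t m s * e m s)"
  using rel_lift[of "(m,c)" s] by (simp add: cls_eq lift_def rel_sym)

lemma F4: "fst x \<le> s \<Longrightarrow> \<exists>c. cls x = cls (s, c)"
  using F3[of "fst x" s "snd x"] by auto

lemma Umod_uniserial: "uniserial Umod"
proof (rule uniserialI[OF Umod_is_rmodule])
  fix X Y assume "X \<in> mcarrier Umod" "Y \<in> mcarrier Umod"
  then obtain x y where xy: "X = cls x" "Y = cls y" by auto
  define s where "s = max (fst x) (fst y)"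
  obtain a b where ab: "cls x = cls (s, a)" "cls y = cls (s, b)"
    using F4[of x s] F4[of y s] s_def by auto
  have "a dvd b \<or> b dvd a" using val unfolding valuation_domain_def by blast
  then show "(\<exists>k. Y = msmul Umod k X) \<or> (\<exists>k. X = msmul Umod k Y)"
  proof
    assume "a dvd b" then obtain k where "b = k * a" by (metis dvdE mult.commute)
    then show ?thesis using ab xy by auto
  next
    assume "b dvd a" then obtain k where "a = k * b" by (metis dvdE mult.commute)
    then show ?thesis using ab xy by auto
  qed
qed

lemma e_nz: "m \<le> s \<Longrightarrow> e m s \<noteq> 0"
  using e_unit[of m s] by auto

end

locale umod_beta = umod_setup +
  fixes b0 assumes b0: "1 / emb (r b0) \<notin> A"
begin

definition beta where "beta = (LEAST b. 1 / emb (r b) \<notin> A)"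

lemma beta_notin: "1 / emb (r beta) \<notin> A"
  unfolding beta_def by (rule LeastI[of _ b0]) (rule b0)

lemma below_beta: "m < beta \<Longrightarrow> emb z / emb (r m) \<in> A"
proof -
  assume "m < beta"
  then have "1 / emb (r m) \<in> A" unfolding beta_def using not_less_Least by blast
  then have "emb z * (1 / emb (r m)) \<in> A" using QsubD(3)[OF QA] by blast
  then show ?thesis by simp
qed

lemma A_small: "y \<in> A \<Longrightarrow> \<exists>p. emb (r beta) * y = emb p \<and> \<not> p dvd 1"
proof -
  assume "y \<in> A"
  from nonunit_quot[OF val QA beta_notin this] obtain p where
    "y = emb p * (1 / emb (r beta))" "\<not> p dvd 1" by blast
  then show ?thesis using rnz[of beta] by (intro exI[of _ p]) simp
qed

definition x0 where "x0 = cls (beta, 1)"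

lemma x0_nz: "x0 \<noteq> mzero Umod"
  using F2[of beta 1] beta_notin by (simp add: x0_def)

lemma Ann_x0: "emb ` Ann Umod x0 = (\<lambda>x. emb (r beta) * x) ` A"
proof (intro set_eqI iffI)
  fix z assume "z \<in> emb ` Ann Umod x0"
  then obtain k where k: "z = emb k" "cls (beta, k) = cls zer" by (auto simp: Ann_def x0_def)
  then have "emb k / emb (r beta) \<in> A" using F2 by blast
  moreover have "z = emb (r beta) * (emb k / emb (r beta))" using k rnz[of beta] by simp
  ultimately show "z \<in> (\<lambda>x. emb (r beta) * x) ` A" by blast
next
  fix z assume "z \<in> (\<lambda>x. emb (r beta) * x) ` A"
  then obtain y where y: "y \<in> A" "z = emb (r beta) * y" by blast
  obtain p where p: "emb (r beta) * y = emb p" using A_small[OF y(1)] by blast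
  have "emb p / emb (r beta) = y" using p rnz[of beta] by (simp add: divide_eq_eq mult.commute)
  then have "cls (beta, p) = cls zer" using F2 y by simp
  then have "p \<in> Ann Umod x0" by (simp add: Ann_def x0_def)
  then show "z \<in> emb ` Ann Umod x0" using y p by simp
qed

end

context umod_beta begin

lemma inv_R_emb: "k \<noteq> 0 \<Longrightarrow> inv_R k = {emb s / emb k | s. True}"
  by (simp add: inv_R_def Fract_emb)

lemma Dset_x0: "Dset Umod x0 = (\<lambda>x. emb (r beta) * x) ` (\<Union>v. inv_R (r v))"
proof (intro set_eqI iffI)
  fix z assume "z \<in> Dset Umod x0"
  then obtain k X where kX: "z \<in> inv_R k" "X \<in> mcarrier Umod" "msmul Umod k X = x0"
    unfolding Dset_def by blast
  then obtain x where X: "X = cls x" by auto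
  define s where "s = max (fst x) beta"
  obtain c where c: "cls x = cls (s, c)" using F4[of x s] s_def by auto
  have eq: "cls (s, k * c) = cls (beta, 1)" using kX(3) X c by (simp add: F1 x0_def)
  have bs: "beta \<le> s" by (simp add: s_def)
  have k0: "k \<noteq> 0"
  proof
    assume "k = 0"
    then have "cls (beta, 1) = cls zer" using eq F2[of s 0] QsubD(1)[OF QA] by simp
    then show False using F2[of beta 1] beta_notin by simp
  qed
  have "ceq (coord s (s, k * c)) (coord s (beta, 1))"
    using eq cls_eq L2[of "(s, k*c)" s "(beta, 1)"] bs by simp
  then have "emb (k * c) / emb (r s) - emb (e beta s) / emb (r beta) \<in> A"
    by (simp add: coord_def e_refl)
  then obtain p where p: "emb (r beta) * (emb (k * c) / emb (r s) - emb (e beta s) / emb (r beta)) = emb p"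
    "\<not> p dvd 1"
    using A_small by blast
  define w where "w = e beta s + p"
  have wu: "w dvd 1" unfolding w_def using unit_add_nonunit[OF val e_unit[OF bs] p(2)] .
  have h1: "emb (r beta) * (emb (k*c) / emb (r s) - emb (e beta s) / emb (r beta))
     = emb (k*c) * emb (r beta) / emb (r s) - emb (e beta s)"
    using rnz[of beta] by (simp add: field_simps)
  have h2: "emb (k*c) * emb (r beta) / emb (r s) = emb w"
    using h1 p(1) unfolding w_def by (simp add: algebra_simps)
  have "emb (k * c * r beta) = emb (w * r s)"
    using h2 rnz[of s] by (simp add: divide_eq_eq)
  then have kc: "k * c * r beta = w * r s" using emb_inj by blast
  obtain w' where w': "w * w' = 1" using wu by (metis dvdE)
  obtain sx where z: "z = emb sx / emb k" using kX(1) k0 by (auto simp: inv_R_emb)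
  have "emb (r beta) * (emb (sx * c * w') / emb (r s)) = emb sx * emb w' * emb (k * c * r beta) / (emb k * emb (r s))"
    using k0 rnz[of s] by (simp add: field_simps)
  also have "\<dots> = emb sx / emb k"
    using k0 rnz[of s] w' unfolding kc by (simp add: field_simps) (metis emb_1 emb_mult mult.commute)
  finally have zz: "z = emb (r beta) * (emb (sx * c * w') / emb (r s))" using z by simp
  have "emb (sx * c * w') / emb (r s) \<in> inv_R (r s)" unfolding inv_R_emb[OF rnz[of s]] by blast
  then show "z \<in> (\<lambda>x. emb (r beta) * x) ` (\<Union>v. inv_R (r v))" using zz by blast
next
  fix z assume "z \<in> (\<lambda>x. emb (r beta) * x) ` (\<Union>v. inv_R (r v))"
  then obtain y v where yv: "z = emb (r beta) * y" "y \<in> inv_R (r v)" by blast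
  obtain sx where y: "y = emb sx / emb (r v)" using yv(2) rnz[of v] by (auto simp: inv_R_emb)
  define s where "s = max v beta"
  have bs: "beta \<le> s" and vs: "v \<le> s" by (auto simp: s_def)
  define k where "k = t beta s * e beta s"
  have k0: "k \<noteq> 0" unfolding k_def using t_nz[OF bs] e_nz[OF bs] by simp
  have "msmul Umod k (cls (s, 1)) = x0"
    using F3[OF bs, of 1] by (simp add: F1 x0_def k_def)
  moreover have "cls (s, 1) \<in> mcarrier Umod" by simp
  moreover have "z \<in> inv_R k"
  proof -
    have rs1: "r s = r beta * t beta s" using r_t[OF bs] .
    have rs2: "r s = r v * t v s" using r_t[OF vs] .
    have "emb (sx * t v s * e beta s) / emb k = emb (sx * t v s) / emb (t beta s)"
      using e_nz[OF bs] t_nz[OF bs] by (simp add: k_def)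
    also have "\<dots> = emb (r beta) * (emb sx / emb (r v))"
    proof -
      have "emb (r beta) * emb (t beta s) = emb (r v) * emb (t v s)" using rs1 rs2 by (metis emb_mult)
      then show ?thesis using t_nz[OF bs] rnz[of v] by (simp add: field_simps)
    qed
    finally have "z = emb (sx * t v s * e beta s) / emb k" using yv y by simp
    then show ?thesis unfolding inv_R_emb[OF k0] by blast
  qed
  ultimately show "z \<in> Dset Umod x0" unfolding Dset_def by blast
qed

lemma Umod_has_type: "has_type Umod (\<Union>v. inv_R (r v)) A"
  unfolding has_type_def
proof (intro bexI conjI)
  show "x0 \<noteq> mzero Umod" by (rule x0_nz)
  show "x0 \<in> mcarrier Umod" by (simp add: x0_def)
  show "rmod_iso (qmod (\<Union>v. inv_R (r v)) A) (qmod (Dset Umod x0) (emb ` Ann Umod x0))"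
    unfolding Dset_x0 Ann_x0 by (rule qmod_scale_iso) (simp add: rnz)
qed

end

context umod_beta begin

lemma std_triv:
  assumes "standard Umod"
  shows "\<exists>g. (\<forall>m. g m dvd 1) \<and> (\<forall>m s. m < s \<longrightarrow> (emb (g m) - emb (e m s * g s)) / emb (r m) \<in> A)"
proof -
  obtain J' A' f where QA': "Q_submodule A'" and bij: "bij_betw f (range cls) (mcarrier (qmod J' A'))"
    and hadd: "\<forall>x\<in>range cls. \<forall>y\<in>range cls. f (madd Umod x y) = madd (qmod J' A') (f x) (f y)"
    and hsm: "\<forall>k. \<forall>x\<in>range cls. f (msmul Umod k x) = msmul (qmod J' A') k (f x)"
    using assms unfolding standard_def rmod_iso_def by auto
  have car: "mcarrier (qmod J' A') = {(\<lambda>a. x + a) ` A' | x. x \<in> J'}" by (simp add: qmod_def)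
  have "\<exists>q. f (cls (v, 1)) = (\<lambda>a. q + a) ` A'" for v
    using bij_betw_apply[OF bij, of "cls (v,1)"] car by auto
  then obtain q where Hq: "\<And>v. f (cls (v, 1)) = (\<lambda>a. q v + a) ` A'" by metis
  have Hc: "f (cls (v, c)) = (\<lambda>a. emb c * q v + a) ` A'" for v c
  proof -
    have "f (msmul Umod c (cls (v, 1))) = msmul (qmod J' A') c (f (cls (v, 1)))" using hsm by blast
    moreover have "msmul Umod c (cls (v, 1)) = cls (v, c)" by (simp add: F1)
    ultimately have "f (cls (v, c)) = msmul (qmod J' A') c (f (cls (v, 1)))" by simp
    also have "\<dots> = msmul (qmod J' A') c ((\<lambda>a. q v + a) ` A')" using Hq by simp
    also have "\<dots> = (\<lambda>a. emb c * q v + a) ` A'" by (rule msmul_coset[OF QA'])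
    finally show ?thesis .
  qed
  have zv: "cls zer = cls (v, 0)" for v using F2[of v 0] QsubD(1)[OF QA] by simp
  have inj: "inj_on f (range cls)" using bij by (simp add: bij_betw_def)
  have Z: "emb c / emb (r v) \<in> A \<longleftrightarrow> emb c * q v \<in> A'" for c v
  proof -
    have "emb c / emb (r v) \<in> A \<longleftrightarrow> cls (v, c) = cls (v, 0)" using F2 zv by simp
    also have "\<dots> \<longleftrightarrow> f (cls (v, c)) = f (cls (v, 0))" using inj by (auto dest: inj_onD)
    also have "\<dots> \<longleftrightarrow> emb c * q v \<in> A'" unfolding Hc coset_eq[OF QA'] by simp
    finally show ?thesis .
  qed
  have T: "q m - emb (t m s * e m s) * q s \<in> A'" if "m \<le> s" for m s
  proof -
    have "f (cls (m, 1)) = f (cls (s, t m s * e m s))" using F3[OF that, of 1] by simp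
    then show ?thesis using Hc[of m 1] Hc[of s "t m s * e m s"] coset_eq[OF QA'] by simp
  qed
  have qb: "q beta \<notin> A'" using Z[of 1 beta] beta_notin by simp
  define l where "l = q beta * emb (r beta)"
  have qb0: "q beta \<noteq> 0" using qb QsubD(1)[OF QA'] by auto
  have l0: "l \<noteq> 0" using qb0 rnz[of beta] by (simp add: l_def)
  have gex: "\<exists>g. g dvd 1 \<and> emb g = q s * emb (r s) / l" if bs: "beta \<le> s" for s
  proof -
    obtain p where p: "q beta - emb (t beta s * e beta s) * q s = emb p * q beta" "\<not> p dvd 1"
      using nonunit_quot[OF val QA' qb T[OF bs]] by blast
    obtain e' where e': "e beta s * e' = 1" using unit_inv[OF bs] by blast
    have u: "(1 + (- p)) dvd 1" using unit_add_nonunit[OF val _ , of 1 "-p"] p(2) by simp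
    have rs: "r s = r beta * t beta s" using r_t[OF bs] .
    have e'': "emb (e beta s) * emb e' = 1" using e' by (metis emb_1 emb_mult)
    have p1: "q beta - emb (t beta s) * emb (e beta s) * q s = emb p * q beta"
      using p(1) by (simp only: emb_mult)
    have "emb (1 - p) * emb e' * (q beta * emb (r beta)) = q s * (emb (r beta) * emb (t beta s))"
      unfolding emb_diff emb_1 using p1 e'' by algebra
    then have "emb ((1 - p) * e') * l = q s * emb (r s)"
      unfolding l_def rs by (simp only: emb_mult)
    then have "emb ((1 - p) * e') = q s * emb (r s) / l" using l0 by (simp add: eq_divide_eq)
    moreover have "e' dvd 1" using e' by (metis dvd_triv_right)
    then have "((1 - p) * e') dvd 1" using u unit_mult2 by simp
    ultimately show ?thesis by blast
  qed
  define g where "g s = (if beta \<le> s then SOME g. g dvd 1 \<and> emb g = q s * emb (r s) / l else 1)" for s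
  have g1: "g s dvd 1 \<and> emb (g s) = q s * emb (r s) / l" if "beta \<le> s" for s
    using someI_ex[OF gex[OF that]] that by (simp add: g_def)
  have gu: "g s dvd 1" for s
  proof (cases "beta \<le> s")
    case True then show ?thesis using g1 by blast
  next
    case False then show ?thesis by (simp add: g_def)
  qed
  have qs: "q s = emb (g s) * l / emb (r s)" if "beta \<le> s" for s
    using g1[OF that] rnz[of s] l0 by (simp add: field_simps)
  have main: "(emb (g m) - emb (e m s * g s)) / emb (r m) \<in> A" if ms: "m < s" for m s
  proof (cases "m < beta")
    case True
    then show ?thesis using below_beta[of m "g m - e m s * g s"] by simp
  next
    case False
    then have bm: "beta \<le> m" by simp
    have bs: "beta \<le> s" using bm ms by simp
    define z where "z = g m - e m s * g s"
    have rs: "r s = r m * t m s" using r_t ms by simp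
    have "q m - emb (t m s * e m s) * q s = l * emb z / emb (r m)"
      unfolding qs[OF bm] qs[OF bs] z_def rs using rnz[of m] t_nz[of m s] ms by (simp add: field_simps)
    then have lz: "l * emb z / emb (r m) \<in> A'" using T[of m s] ms by simp
    obtain g' where g': "g m * g' = 1" using gu[of m] by (metis dvdE)
    have "emb (z * g') * q m = l * emb z / emb (r m)"
      unfolding qs[OF bm] using g' by (simp add: field_simps) (metis emb_1 emb_mult mult.commute)
    then have c1: "emb (z * g') * q m \<in> A'" using lz by simp
    have "emb (z * g') / emb (r m) \<in> A" using Z[of "z * g'" m] c1 by blast
    then have m1: "emb (g m) * (emb (z * g') / emb (r m)) \<in> A" using QsubD(3)[OF QA] by blast
    have m2: "emb (g m) * (emb (z * g') / emb (r m)) = emb z / emb (r m)"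
      using g' by (simp add: field_simps) (metis emb_1 emb_mult mult.commute)
    from m1 have "emb z / emb (r m) \<in> A" unfolding m2 .
    then show ?thesis by (simp add: z_def)
  qed
  show ?thesis using gu main by blast
qed

end

locale constr_setup =
  fixes r :: "'w::wellorder \<Rightarrow> 'a::idom" and A :: "'a fract set" and N :: "'w \<Rightarrow> 'a set"
  assumes val: "valuation_domain TYPE('a)"
  and rnz: "\<And>v. r v \<noteq> 0" and rdvd: "\<And>m v. m < v \<Longrightarrow> r m dvd r v" and QA: "Q_submodule A"
  and filt: "omega1_filtration N r" and om: "omega1_type TYPE('w)"
begin

definition eqv :: "'w \<Rightarrow> 'a \<Rightarrow> 'a \<Rightarrow> bool" where
  "eqv m x y \<longleftrightarrow> (emb x - emb y) / emb (r m) \<in> A"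

lemma eqv_refl: "eqv m x x" using QsubD(1)[OF QA] by (simp add: eqv_def)
lemma eqv_sym: assumes "eqv m x y" shows "eqv m y x"
proof -
  have "(emb y - emb x) / emb (r m) = - ((emb x - emb y) / emb (r m))" by (simp add: diff_divide_distrib)
  then show ?thesis using QsubD(4)[OF QA, of "(emb x - emb y) / emb (r m)"] assms unfolding eqv_def by simp
qed
lemma eqv_trans: assumes "eqv m x y" "eqv m y z" shows "eqv m x z"
proof -
  have "(emb x - emb z) / emb (r m) = (emb x - emb y) / emb (r m) + (emb y - emb z) / emb (r m)"
    by (simp add: diff_divide_distrib)
  then show ?thesis using QsubD(2)[OF QA, of "(emb x - emb y) / emb (r m)" "(emb y - emb z) / emb (r m)"] assms
    unfolding eqv_def by simp
qed
lemma eqv_mult: "eqv m x y \<Longrightarrow> eqv m (k * x) (k * y)"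
  using QsubD(3)[OF QA, of "(emb x - emb y) / emb (r m)" k]
  by (simp add: eqv_def algebra_simps)
lemma eqv_multr: "eqv m x y \<Longrightarrow> eqv m (x * k) (y * k)"
  using eqv_mult[of m x y k] by (simp add: mult.commute)
lemma eqv_mono: assumes "m \<le> s" "eqv s x y" shows "eqv m x y"
proof -
  have "r m dvd r s" using rdvd[of m s] assms(1) by (cases "m = s") (auto simp: order_le_less)
  then obtain k where k: "r s = r m * k" by (rule dvdE)
  have "emb k * ((emb x - emb y) / emb (r s)) \<in> A"
    using QsubD(3)[OF QA, of "(emb x - emb y) / emb (r s)" k] assms(2) unfolding eqv_def by blast
  moreover have "emb k * ((emb x - emb y) / emb (r s)) = (emb x - emb y) / emb (r m)"
    using k rnz[of s] rnz[of m] by (simp add: field_simps)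
  ultimately show ?thesis by (simp add: eqv_def)
qed

lemma cnt_below: "countable {x::'w. x < d}" using om unfolding omega1_type_def by blast

lemmas filt' = filt[unfolded omega1_filtration_def]
lemma filt_sub: "\<forall>a. countable_subring (N a)" using filt' by (rule conjunct1)
lemma filt_mono: "\<forall>a b. a \<le> b \<longrightarrow> N a \<subseteq> N b" using filt'[THEN conjunct2] by (rule conjunct1)
lemma filt_union: "(\<Union>a. N a) = UNIV" using filt'[THEN conjunct2, THEN conjunct2] by (rule conjunct1)
lemma filt_lim: "\<forall>a. limit_pt a \<longrightarrow> N a = (\<Union>b\<in>{b. b < a}. N b)"
  using filt'[THEN conjunct2, THEN conjunct2, THEN conjunct2] by (rule conjunct1)
lemma filt_units: "\<forall>a. {x \<in> N a. x dvd 1} = {x \<in> N a. \<exists>y\<in>N a. x * y = 1}"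
  using filt'[THEN conjunct2, THEN conjunct2, THEN conjunct2, THEN conjunct2] by (rule conjunct1)
lemma filt_r: "\<forall>v a. r v \<in> N a \<longleftrightarrow> v < a"
  using filt'[THEN conjunct2, THEN conjunct2, THEN conjunct2, THEN conjunct2] by (rule conjunct2)

lemma N_sub: "countable_subring (N d)" using filt_sub by blast

lemma N_closed: "x \<in> N d \<Longrightarrow> y \<in> N d \<Longrightarrow> x * y \<in> N d" "1 \<in> N d" "0 \<in> N d"
  "x \<in> N d \<Longrightarrow> y \<in> N d \<Longrightarrow> x + y \<in> N d" "x \<in> N d \<Longrightarrow> y \<in> N d \<Longrightarrow> x - y \<in> N d"
  using N_sub[of d] unfolding countable_subring_def by blast+

definition uinv :: "'a \<Rightarrow> 'a" where "uinv u = (SOME v. u * v = 1)"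

lemma uinv: "u dvd 1 \<Longrightarrow> u * uinv u = 1"
  unfolding uinv_def by (rule someI_ex) (metis dvdE)

lemma uinv_unit: "u dvd 1 \<Longrightarrow> uinv u dvd 1"
  using uinv by (metis dvd_triv_right)

lemma uinv_N: assumes "u dvd 1" "u \<in> N d" shows "uinv u \<in> N d"
proof -
  have "u \<in> {x \<in> N d. x dvd 1}" using assms by simp
  then have "u \<in> {x \<in> N d. \<exists>y\<in>N d. x * y = 1}" using filt_units by blast
  then obtain y where y: "y \<in> N d" "u * y = 1" by blast
  have u0: "u \<noteq> 0" using y(2) by auto
  have "u * uinv u = u * y" using uinv[OF assms(1)] y(2) by simp
  then have "uinv u = y" using u0 by simp
  then show ?thesis using y by simp
qed

definition cohb :: "('w \<Rightarrow> 'w \<Rightarrow> 'a) \<Rightarrow> 'w \<Rightarrow> bool" where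
  "cohb E d \<longleftrightarrow> (\<forall>m. E m m = 1) \<and> (\<forall>m s. m \<le> s \<and> s < d \<longrightarrow> E m s dvd 1)
     \<and> (\<forall>m k s. m \<le> k \<and> k \<le> s \<and> s < d \<longrightarrow> eqv m (E m k * E k s) (E m s))"

definition solb :: "('w \<Rightarrow> 'w \<Rightarrow> 'a) \<Rightarrow> 'w \<Rightarrow> ('w \<Rightarrow> 'a) \<Rightarrow> bool" where
  "solb E d w \<longleftrightarrow> (\<forall>m<d. w m dvd 1) \<and> (\<forall>m k. m < k \<and> k < d \<longrightarrow> eqv m (w m) (E m k * w k))"

lemma sol_exists:
  assumes coh: "cohb E d"
  shows "\<exists>w. solb E d w \<and> ((\<forall>m s. m < s \<and> s < d \<longrightarrow> E m s \<in> N d) \<longrightarrow> (\<forall>m<d. w m \<in> N d))"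
proof (cases "{x. x < d} = {}")
  case True
  then show ?thesis by (intro exI[of _ "\<lambda>_. 1"]) (auto simp: solb_def)
next
  case False
  define S where "S = {x. x < d}"
  have Sne: "S \<noteq> {}" and Sc: "countable S" using False cnt_below by (auto simp: S_def)
  define en where "en = from_nat_into S"
  have en_range: "range en = S" using Sne Sc by (simp add: en_def)
  define M where "M n = Max (en ` {..n})" for n
  have M_in: "M n \<in> S" for n
  proof -
    have "M n \<in> en ` {..n}" unfolding M_def by (rule Max_in) auto
    then show ?thesis using en_range by auto
  qed
  have M_ge: "k \<le> n \<Longrightarrow> en k \<le> M n" for k n unfolding M_def by (rule Max_ge) auto
  have M_mono: "n \<le> j \<Longrightarrow> M n \<le> M j" for n j
    unfolding M_def by (rule Max_mono) auto
  have Md: "M n < d" for n using M_in by (simp add: S_def)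
  have E1: "E m m = 1" for m using coh by (simp add: cohb_def)
  have Eu: "m \<le> s \<Longrightarrow> s < d \<Longrightarrow> E m s dvd 1" for m s using coh by (simp add: cohb_def)
  have Ec: "m \<le> k \<Longrightarrow> k \<le> s \<Longrightarrow> s < d \<Longrightarrow> eqv m (E m k * E k s) (E m s)" for m k s
    using coh by (simp add: cohb_def)
  define W where "W = rec_nat 1 (\<lambda>n w. w * uinv (E (M n) (M (Suc n))))"
  have W0: "W 0 = 1" by (simp add: W_def)
  have WS: "W (Suc n) = W n * uinv (E (M n) (M (Suc n)))" for n by (simp add: W_def)
  have Wstep: "E (M n) (M (Suc n)) * W (Suc n) = W n" for n
    using uinv[OF Eu[OF M_mono Md]] unfolding WS by (metis le_SucI le_refl mult.assoc mult.commute mult_1_right)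
  have Wu: "W n dvd 1" for n
  proof (induction n)
    case 0 then show ?case by (simp add: W0)
  next
    case (Suc n)
    have "M n \<le> M (Suc n)" by (rule M_mono) simp
    then have "uinv (E (M n) (M (Suc n))) dvd 1" using uinv_unit Eu Md by blast
    then show ?case unfolding WS using Suc.IH by (metis unit_mult2)
  qed
  have P: "eqv (M n) (W n) (E (M n) (M j) * W j)" if "n \<le> j" for n j
    using that
  proof (induction j)
    case 0 then show ?case by (simp add: E1 eqv_refl)
  next
    case (Suc j)
    show ?case
    proof (cases "n = Suc j")
      case True then show ?thesis by (simp add: E1 eqv_refl)
    next
      case False
      then have nj: "n \<le> j" using Suc.prems by simp
      have "eqv (M n) (W n) (E (M n) (M j) * (E (M j) (M (Suc j)) * W (Suc j)))"
        using Suc.IH[OF nj] Wstep[of j] by simp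
      moreover have "eqv (M n) (E (M n) (M j) * E (M j) (M (Suc j)) * W (Suc j)) (E (M n) (M (Suc j)) * W (Suc j))"
        by (rule eqv_multr, rule Ec) (auto intro: M_mono nj Md)
      ultimately show ?thesis by (metis eqv_trans mult.assoc)
    qed
  qed
  have idx_ex: "m < d \<Longrightarrow> \<exists>n. m \<le> M n" for m
  proof -
    assume "m < d"
    then have "m \<in> range en" using en_range by (simp add: S_def)
    then obtain k where "en k = m" by blast
    then show ?thesis using M_ge[of k k] by blast
  qed
  define idx where "idx m = (LEAST n. m \<le> M n)" for m
  have idx1: "m < d \<Longrightarrow> m \<le> M (idx m)" for m unfolding idx_def by (rule LeastI_ex) (rule idx_ex)
  have idx2: "m \<le> M n \<Longrightarrow> idx m \<le> n" for m n unfolding idx_def by (rule Least_le)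
  define w where "w m = E m (M (idx m)) * W (idx m)" for m
  have sol: "solb E d w" unfolding solb_def
  proof (intro conjI allI impI)
    fix m assume "m < d"
    then show "w m dvd 1" unfolding w_def using idx1 Md Eu Wu unit_mult2 by blast
  next
    fix m k assume mk: "m < k \<and> k < d"
    define a where "a = idx m"
    define b where "b = idx k"
    have kb: "k \<le> M b" using idx1 mk b_def by blast
    have ma: "m \<le> M a" using idx1 mk a_def by force
    have mk1: "m < k" using mk by simp
    have "m < M b" using mk1 kb by (rule order.strict_trans2)
    then have "m \<le> M b" by (rule less_imp_le)
    then have ab: "a \<le> b" unfolding a_def using idx2[of m b] by blast
    have Mab: "M a \<le> M b" using M_mono ab by blast
    have h1: "eqv m (E m k * E k (M b) * W b) (E m (M b) * W b)"
      by (rule eqv_multr, rule Ec) (use mk kb Md in auto)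
    have h2: "eqv m (E m (M a) * W a) (E m (M a) * (E (M a) (M b) * W b))"
      by (rule eqv_mult, rule eqv_mono[OF ma], rule P[OF ab])
    have h3: "eqv m (E m (M a) * E (M a) (M b) * W b) (E m (M b) * W b)"
      by (rule eqv_multr, rule Ec) (use ma Mab Md in auto)
    have "eqv m (w m) (E m (M b) * W b)"
      using eqv_trans[OF h2] h3 unfolding w_def a_def[symmetric] by (simp add: mult.assoc)
    moreover have "eqv m (E m k * w k) (E m (M b) * W b)"
      using h1 unfolding w_def b_def[symmetric] by (simp add: mult.assoc)
    ultimately show "eqv m (w m) (E m k * w k)" using eqv_trans eqv_sym by blast
  qed
  have inN: "\<forall>m<d. w m \<in> N d" if hN: "\<forall>m s. m < s \<and> s < d \<longrightarrow> E m s \<in> N d"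
  proof -
    have EN: "m \<le> s \<Longrightarrow> s < d \<Longrightarrow> E m s \<in> N d" for m s
      using hN E1 N_closed(2) by (cases "m = s") (auto simp: order_le_less)
    have WN: "W n \<in> N d" for n
      by (induction n) (auto simp: W0 WS N_closed intro!: N_closed(1) uinv_N Eu EN M_mono Md)
    show ?thesis unfolding w_def using WN EN idx1 Md N_closed(1) by blast
  qed
  show ?thesis using sol inN by blast
qed

end

context constr_setup begin

definition bad :: "'w \<Rightarrow> ('w \<Rightarrow> 'a) \<Rightarrow> bool" where
  "bad d w \<longleftrightarrow> (\<forall>g. (\<forall>m. g m dvd 1) \<and> (\<forall>m<d. g m \<in> N d) \<longrightarrow> \<not> (\<forall>m<d. eqv m (g m) (w m * g d)))"

definition good :: "('w \<Rightarrow> 'w \<Rightarrow> 'a) \<Rightarrow> 'w \<Rightarrow> ('w \<Rightarrow> 'a) \<Rightarrow> bool" where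
  "good E d w \<longleftrightarrow> solb E d w \<and>
     (d \<in> Eprime r N A \<and> (\<forall>m s. m < s \<and> s < d \<longrightarrow> E m s \<in> N d) \<longrightarrow> bad d w)"

lemma good_exists:
  assumes coh: "cohb E d"
  shows "\<exists>w. good E d w"
proof -
  obtain w0 where w0: "solb E d w0" and w0N: "(\<forall>m s. m < s \<and> s < d \<longrightarrow> E m s \<in> N d) \<longrightarrow> (\<forall>m<d. w0 m \<in> N d)"
    using sol_exists[OF coh] by blast
  show ?thesis
  proof (cases "d \<in> Eprime r N A \<and> (\<forall>m s. m < s \<and> s < d \<longrightarrow> E m s \<in> N d)")
    case False
    then show ?thesis using w0 by (auto simp: good_def)
  next
    case True
    then have w0N': "\<forall>m<d. w0 m \<in> N d" using w0N by blast
    obtain u where Tu: "Tseq r A d u"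
      and uf: "\<forall>f. f dvd 1 \<longrightarrow> (\<exists>s<d. emb (u s * f) \<notin> {emb n + y | n y. n \<in> N d \<and> y \<in> scal (r s) A})"
      using True unfolding Eprime_def by blast
    have uu: "s < d \<Longrightarrow> u s dvd 1" for s using Tu by (simp add: Tseq_def)
    have ueq: "eqv m (u k) (u m)" if "m < k" "k < d" for m k
    proof -
      have "emb (u k - u m) \<in> scal (r m) A" using Tu that by (simp add: Tseq_def)
      then obtain x where x: "x \<in> A" "emb (u k - u m) = emb (r m) * x" by (auto simp: scal_def)
      then have "(emb (u k) - emb (u m)) / emb (r m) = x" using rnz[of m] by simp
      then show ?thesis using x by (simp add: eqv_def)
    qed
    define w where "w m = w0 m * u m" for m
    have solw: "solb E d w" unfolding solb_def
    proof (intro conjI allI impI)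
      fix m assume "m < d" then show "w m dvd 1"
        using w0 uu unit_mult2 by (auto simp: w_def solb_def)
    next
      fix m k assume mk: "m < k \<and> k < d"
      have "eqv m (w0 m * u m) (E m k * w0 k * u m)"
        using w0 mk eqv_multr by (simp add: solb_def)
      moreover have "eqv m (E m k * w0 k * u m) (E m k * w0 k * u k)"
        using ueq[of m k] mk eqv_sym eqv_mult by blast
      ultimately show "eqv m (w m) (E m k * w k)" unfolding w_def
        using eqv_trans by (metis mult.assoc)
    qed
    have badw: "bad d w" unfolding bad_def
    proof (intro allI impI notI)
      fix g assume g: "(\<forall>m. g m dvd 1) \<and> (\<forall>m<d. g m \<in> N d)" and all: "\<forall>m<d. eqv m (g m) (w m * g d)"
      define T where "T s = {emb n + y | n y. n \<in> N d \<and> y \<in> scal (r s) A}" for s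
      have uf': "\<forall>f. f dvd 1 \<longrightarrow> (\<exists>s<d. emb (u s * f) \<notin> T s)" using uf unfolding T_def .
      have gd: "g d dvd 1" using g by blast
      obtain s where s: "s < d" "emb (u s * g d) \<notin> T s"
        using uf'[rule_format, OF gd] by blast
      have w0u: "w0 s dvd 1" using w0 s(1) by (simp add: solb_def)
      define w' where "w' = uinv (w0 s)"
      have w'N: "w' \<in> N d" unfolding w'_def using uinv_N[OF w0u] w0N' s(1) by blast
      have w'1: "w' * w0 s = 1" using uinv[OF w0u] by (simp add: w'_def mult.commute)
      have "eqv s (w' * g s) (w' * (w0 s * u s * g d))" using all s(1) eqv_mult by (simp add: w_def)
      also have "w' * (w0 s * u s * g d) = u s * g d" using w'1 by (metis mult.assoc mult_1)
      finally have e1: "eqv s (u s * g d) (w' * g s)" using eqv_sym by blast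
      define y where "y = emb (u s * g d) - emb (w' * g s)"
      have "y / emb (r s) \<in> A" using e1 by (simp add: eqv_def y_def)
      moreover have "y = emb (r s) * (y / emb (r s))" using rnz[of s] by simp
      ultimately have "y \<in> scal (r s) A" unfolding scal_def by blast
      moreover have "w' * g s \<in> N d" using w'N g s(1) N_closed(1) by blast
      moreover have "emb (u s * g d) = emb (w' * g s) + y" by (simp add: y_def)
      ultimately have "emb (u s * g d) \<in> T s" unfolding T_def by blast
      then show False using s(2) by blast
    qed
    show ?thesis using solw badw by (auto simp: good_def)
  qed
qed

lemma good_cong:
  assumes "\<forall>m s. s < d \<longrightarrow> E m s = E' m s"
  shows "good E d w = good E' d w"
proof -
  have "solb E d w = solb E' d w" unfolding solb_def using assms
    by (intro conj_cong refl) (auto simp del: eqv_def)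
  moreover have "(\<forall>m s. m < s \<and> s < d \<longrightarrow> E m s \<in> N d) = (\<forall>m s. m < s \<and> s < d \<longrightarrow> E' m s \<in> N d)"
    using assms by auto
  ultimately show ?thesis unfolding good_def by simp
qed

lemma bad_cong:
  assumes "\<forall>m<d. w m = w' m"
  shows "bad d w = bad d w'"
  using assms unfolding bad_def by auto

definition H :: "('w \<Rightarrow> 'w \<Rightarrow> 'a) \<Rightarrow> 'w \<Rightarrow> 'w \<Rightarrow> 'a" where
  "H F d = (SOME w. good (\<lambda>m s. if m = s then 1 else F s m) d w)"

definition col :: "'w \<Rightarrow> 'w \<Rightarrow> 'a" where "col = wfrec {(x, y). x < y} H"

definition eF :: "'w \<Rightarrow> 'w \<Rightarrow> 'a" where "eF m s = (if m = s then 1 else col s m)"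

lemma col_unfold: "col d = H (cut col {(x, y). x < y} d) d"
  unfolding col_def by (rule wfrec[OF wf])

lemma good_solb: "good E d w \<Longrightarrow> solb E d w" unfolding good_def by (rule conjunct1)
lemma solb_unit: "solb E d w \<Longrightarrow> m < d \<Longrightarrow> w m dvd 1" unfolding solb_def by blast
lemma solb_eq: "solb E d w \<Longrightarrow> m < k \<Longrightarrow> k < d \<Longrightarrow> eqv m (w m) (E m k * w k)"
  unfolding solb_def by blast

lemma col_good: "good eF d (col d)"
proof (induction d rule: less_induct)
  case (less d)
  have coh: "cohb eF d" unfolding cohb_def
  proof (intro conjI allI impI)
    fix m show "eF m m = 1" by (simp add: eF_def)
  next
    fix m s assume h: "m \<le> s \<and> s < d"
    show "eF m s dvd 1"
    proof (cases "m = s")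
      case True then show ?thesis by (simp add: eF_def)
    next
      case False
      then have "m < s" using h le_neq_trans by blast
      then have "col s m dvd 1" using solb_unit[OF good_solb[OF less[of s]]] h by blast
      then show ?thesis using False by (simp add: eF_def)
    qed
  next
    fix m k s assume h: "m \<le> k \<and> k \<le> s \<and> s < d"
    show "eqv m (eF m k * eF k s) (eF m s)"
    proof (cases "m = k")
      case True then show ?thesis using eqv_refl by (simp add: eF_def)
    next
      case mk: False
      show ?thesis
      proof (cases "k = s")
        case True then show ?thesis using eqv_refl by (simp add: eF_def)
      next
        case False
        then have "m < k" "k < s" using h mk le_neq_trans by blast+
        then have "eqv m (col s m) (eF m k * col s k)"
          using solb_eq[OF good_solb[OF less[of s]]] h by blast
        moreover have "m \<noteq> s" using \<open>m < k\<close> \<open>k < s\<close> less_trans less_irrefl by metis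
        ultimately show ?thesis using False mk eqv_sym by (simp add: eF_def)
      qed
    qed
  qed
  define E' where "E' = (\<lambda>m s. if m = s then 1 else cut col {(x, y). x < y} d s m)"
  have agree: "\<forall>m s. s < d \<longrightarrow> eF m s = E' m s" by (simp add: E'_def eF_def cut_apply)
  have coh': "cohb E' d" unfolding cohb_def
  proof (intro conjI allI impI)
    fix m show "E' m m = 1" by (simp add: E'_def)
  next
    fix m s assume h: "m \<le> s \<and> s < d"
    then show "E' m s dvd 1" using coh agree unfolding cohb_def by metis
  next
    fix m k s assume h: "m \<le> k \<and> k \<le> s \<and> s < d"
    then have "k < d" using le_less_trans by blast
    then show "eqv m (E' m k * E' k s) (E' m s)" using coh agree h unfolding cohb_def by metis
  qed
  obtain w where "good E' d w" using good_exists[OF coh'] by blast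
  then have "good E' d (col d)" unfolding col_unfold H_def E'_def[symmetric] using someI[of "good E' d" w] by simp
  then show ?case using good_cong[OF agree] by simp
qed

lemma eF_refl: "eF m m = 1" by (simp add: eF_def)

lemma eF_unit: assumes "m \<le> s" shows "eF m s dvd 1"
proof (cases "m = s")
  case True then show ?thesis by (simp add: eF_def)
next
  case False
  then have "m < s" using assms le_neq_trans by blast
  then have "col s m dvd 1" using solb_unit[OF good_solb[OF col_good[of s]]] by blast
  then show ?thesis using False by (simp add: eF_def)
qed

lemma eF_coh: assumes "m \<le> k" "k \<le> s" shows "eqv m (eF m k * eF k s) (eF m s)"
proof (cases "m = k")
  case True then show ?thesis using eqv_refl by (simp add: eF_def)
next
  case mk: False
  show ?thesis
  proof (cases "k = s")
    case True then show ?thesis using eqv_refl by (simp add: eF_def)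
  next
    case False
    then have "m < k" "k < s" using assms mk le_neq_trans by blast+
    then have "eqv m (col s m) (eF m k * col s k)"
      using solb_eq[OF good_solb[OF col_good[of s]]] by blast
    moreover have "m \<noteq> s" using \<open>m < k\<close> \<open>k < s\<close> less_trans less_irrefl by metis
    ultimately show ?thesis using False mk eqv_sym by (simp add: eF_def)
  qed
qed

lemma eF_diag:
  assumes "d \<in> Eprime r N A" "\<forall>m s. m < s \<and> s < d \<longrightarrow> eF m s \<in> N d"
  shows "bad d (\<lambda>m. eF m d)"
proof -
  have imp: "d \<in> Eprime r N A \<and> (\<forall>m s. m < s \<and> s < d \<longrightarrow> eF m s \<in> N d) \<longrightarrow> bad d (col d)"
    using col_good[of d] unfolding good_def by (rule conjunct2)
  have "bad d (col d)" by (rule mp[OF imp]) (rule conjI[OF assms(1) assms(2)])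
  moreover have "\<forall>m<d. col d m = eF m d" by (simp add: eF_def)
  ultimately show ?thesis using bad_cong[of d "col d" "\<lambda>m. eF m d"] by simp
qed

end

context constr_setup begin

lemma bounded: assumes "countable (S :: 'w set)" shows "\<exists>b. \<forall>s\<in>S. s < b"
proof (rule ccontr)
  assume "\<not> (\<exists>b. \<forall>s\<in>S. s < b)"
  then have h: "\<forall>b. \<exists>s\<in>S. b \<le> s" by (meson not_less)
  have "UNIV \<subseteq> (\<Union>s\<in>S. insert s {x. x < s})"
  proof
    fix b :: 'w
    obtain s where "s \<in> S" "b \<le> s" using h by blast
    then show "b \<in> (\<Union>s\<in>S. insert s {x. x < s})" by (auto simp: order_le_less)
  qed
  moreover have "countable (\<Union>s\<in>S. insert s {x. x < s})"
    using assms cnt_below by (intro countable_UN) auto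
  ultimately have "countable (UNIV :: 'w set)" using countable_subset by blast
  then show False using om unfolding omega1_type_def by blast
qed

lemma N_mono: "a \<le> b \<Longrightarrow> N a \<subseteq> N b" using filt_mono by blast

lemma cover: assumes "countable (X :: 'a set)" shows "\<exists>b. X \<subseteq> N b"
proof -
  have "\<forall>x. \<exists>b. x \<in> N b" using filt_union by blast
  then obtain bf where bf: "\<And>x. x \<in> N (bf x)" by metis
  obtain b where b: "\<forall>s\<in>bf ` X. s < b" using bounded[of "bf ` X"] assms by blast
  have "X \<subseteq> N b"
  proof
    fix x assume "x \<in> X"
    then have "bf x < b" using b by blast
    then have "bf x \<le> b" by (rule less_imp_le)
    then show "x \<in> N b" using bf[of x] N_mono[of "bf x" b] by blast
  qed
  then show ?thesis by blast
qed

lemma club_set: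
  fixes G :: "'w \<Rightarrow> 'a set"
  assumes cG: "\<And>s. countable (G s)"
  shows "club {d. \<forall>s<d. G s \<subseteq> N d}"
  unfolding club_def
proof (intro conjI allI impI)
  fix a :: 'w
  have step: "\<exists>b. al < b \<and> (\<Union>s\<in>{s. s < al}. G s) \<subseteq> N b" for al :: 'w
  proof -
    have "countable (\<Union>s\<in>{s. s < al}. G s)" using cnt_below cG by (intro countable_UN) auto
    then obtain b1 where b1: "(\<Union>s\<in>{s. s < al}. G s) \<subseteq> N b1" using cover by blast
    obtain b2 where b2: "al < b2" using bounded[of "{al}"] by auto
    have "N b1 \<subseteq> N (max b1 b2)" by (rule N_mono) simp
    then show ?thesis using b1 b2 by (intro exI[of _ "max b1 b2"]) (auto simp: less_max_iff_disj)
  qed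
  define h where "h al = (SOME b. al < b \<and> (\<Union>s\<in>{s. s < al}. G s) \<subseteq> N b)" for al
  have h1: "al < h al" and h2: "s < al \<Longrightarrow> G s \<subseteq> N (h al)" for al s
    using someI_ex[OF step[of al]] unfolding h_def[symmetric] by auto
  define an where "an n = (h ^^ n) a" for n
  have anS: "an (Suc n) = h (an n)" for n by (simp add: an_def)
  have "countable (range an)" by simp
  then obtain b0 where "\<forall>s\<in>range an. s < b0" using bounded by blast
  then have ex: "\<exists>b. \<forall>n. an n < b" by blast
  define d where "d = (LEAST b. \<forall>n. an n < b)"
  have dub: "\<forall>n. an n < d" unfolding d_def using LeastI_ex[OF ex] .
  have dleast: "s < d \<Longrightarrow> \<exists>n. s \<le> an n" for s
  proof -
    assume "s < d"
    then have "\<not> (\<forall>n. an n < s)" unfolding d_def using not_less_Least by blast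
    then show ?thesis by (meson not_less)
  qed
  have "d \<in> {d. \<forall>s<d. G s \<subseteq> N d}"
  proof (intro CollectI allI impI)
    fix s assume "s < d"
    then obtain n where n: "s \<le> an n" using dleast by blast
    have "s < an (Suc n)" using n h1[of "an n"] anS[of n] by (metis order.strict_trans1)
    then have "G s \<subseteq> N (an (Suc (Suc n)))" using h2 anS by metis
    also have "\<dots> \<subseteq> N d" using dub N_mono less_imp_le by blast
    finally show "G s \<subseteq> N d" .
  qed
  moreover have "a < d" using dub[rule_format, of 0] by (simp add: an_def)
  ultimately show "\<exists>b\<in>{d. \<forall>s<d. G s \<subseteq> N d}. a < b" by blast
next
  fix d :: 'w
  assume h: "limit_pt d \<and> (\<forall>b<d. \<exists>c\<in>{d. \<forall>s<d. G s \<subseteq> N d}. b < c \<and> c < d)"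
  show "d \<in> {d. \<forall>s<d. G s \<subseteq> N d}"
  proof (intro CollectI allI impI)
    fix s assume "s < d"
    then obtain c where c: "\<forall>s<c. G s \<subseteq> N c" "s < c" "c < d" using h by blast
    have "c \<le> d" using c(3) by (rule less_imp_le)
    then show "G s \<subseteq> N d" using N_mono[of c d] c(1,2) by blast
  qed
qed

lemma club_UNIV: "club (UNIV :: 'w set)"
  unfolding club_def using bounded[of "{a}" for a] by auto

lemma exists_b0:
  assumes "nonzero_class (Eprime r N A)"
  shows "\<exists>b. 1 / emb (r b) \<notin> A"
proof (rule ccontr)
  assume "\<not> ?thesis"
  then have all: "\<And>b. 1 / emb (r b) \<in> A" by blast
  have "Eprime r N A \<inter> UNIV \<noteq> {}" using assms[unfolded nonzero_class_def, rule_format, OF club_UNIV] .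
  then obtain d where d: "d \<in> Eprime r N A" by blast
  then obtain u where Tu: "Tseq r A d u"
      and uf: "\<forall>f. f dvd 1 \<longrightarrow> (\<exists>s<d. emb (u s * f) \<notin> {emb n + y | n y. n \<in> N d \<and> y \<in> scal (r s) A})"
    unfolding Eprime_def by blast
  define T where "T s = {emb n + y | n y. n \<in> N d \<and> y \<in> scal (r s) A}" for s
  have uf': "\<forall>f. f dvd 1 \<longrightarrow> (\<exists>s<d. emb (u s * f) \<notin> T s)" using uf unfolding T_def .
  obtain s where s: "s < d" "emb (u s * 1) \<notin> T s" using uf'[rule_format, of 1] by auto
  have "emb (u s) * (1 / emb (r s)) \<in> A" using QsubD(3)[OF QA all] by blast
  moreover have "emb (u s) = emb (r s) * (emb (u s) * (1 / emb (r s)))" using rnz[of s] by simp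
  ultimately have "emb (u s) \<in> scal (r s) A" unfolding scal_def by blast
  moreover have "emb (u s) = emb 0 + emb (u s)" by simp
  moreover have "(0::'a) \<in> N d" by (rule N_closed(3))
  ultimately have "emb (u s) \<in> T s" unfolding T_def by blast
  then show False using s by simp
qed

lemma no_triv:
  assumes st: "nonzero_class (Eprime r N A)"
    and gu: "\<forall>m. g m dvd 1"
    and gt: "\<forall>m s. m < s \<longrightarrow> eqv m (g m) (eF m s * g s)"
  shows False
proof -
  define G where "G s = insert (g s) ((\<lambda>m. eF m s) ` {m. m < s})" for s
  have cG: "countable (G s)" for s unfolding G_def using cnt_below by auto
  have cl: "club {d. \<forall>s<d. G s \<subseteq> N d}" by (rule club_set[OF cG])
  have ne: "Eprime r N A \<inter> {d. \<forall>s<d. G s \<subseteq> N d} \<noteq> {}"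
    using st[unfolded nonzero_class_def, rule_format, OF cl] .
  then obtain d where "d \<in> Eprime r N A \<inter> {d. \<forall>s<d. G s \<subseteq> N d}" by (meson ex_in_conv)
  then have d: "d \<in> Eprime r N A" "\<forall>s<d. G s \<subseteq> N d" by auto
  have gN: "\<forall>m<d. g m \<in> N d"
  proof (intro allI impI)
    fix m assume "m < d" then have "G m \<subseteq> N d" using d(2) by blast
    then show "g m \<in> N d" unfolding G_def by blast
  qed
  have eN: "\<forall>m s. m < s \<and> s < d \<longrightarrow> eF m s \<in> N d"
  proof (intro allI impI)
    fix m s assume ms: "m < s \<and> s < d" then have "G s \<subseteq> N d" using d(2) by blast
    moreover have "eF m s \<in> G s" unfolding G_def using ms by blast
    ultimately show "eF m s \<in> N d" by blast
  qed
  have "bad d (\<lambda>m. eF m d)" by (rule eF_diag[OF d(1) eN])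
  then have "\<not> (\<forall>m<d. eqv m (g m) (eF m d * g d))" unfolding bad_def using gu gN by blast
  then show False using gt by blast
qed

end


lemma rmodD_all:
  assumes "is_rmodule M"
  shows "mzero M \<in> mcarrier M"
   "\<forall>x\<in>mcarrier M. \<forall>y\<in>mcarrier M. madd M x y \<in> mcarrier M"
   "\<forall>r. \<forall>x\<in>mcarrier M. msmul M r x \<in> mcarrier M"
   "\<forall>x\<in>mcarrier M. \<forall>y\<in>mcarrier M. \<forall>z\<in>mcarrier M.
         madd M (madd M x y) z = madd M x (madd M y z)"
   "\<forall>x\<in>mcarrier M. \<forall>y\<in>mcarrier M. madd M x y = madd M y x"
   "\<forall>x\<in>mcarrier M. madd M (mzero M) x = x"
   "\<forall>x\<in>mcarrier M. \<exists>y\<in>mcarrier M. madd M x y = mzero M"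
   "\<forall>r. \<forall>x\<in>mcarrier M. \<forall>y\<in>mcarrier M.
         msmul M r (madd M x y) = madd M (msmul M r x) (msmul M r y)"
   "\<forall>r s. \<forall>x\<in>mcarrier M. msmul M (r + s) x = madd M (msmul M r x) (msmul M s x)"
   "\<forall>r s. \<forall>x\<in>mcarrier M. msmul M (r * s) x = msmul M r (msmul M s x)"
   "\<forall>x\<in>mcarrier M. msmul M 1 x = x"
  using assms unfolding is_rmodule_def by (auto elim!: conjE)

lemma rmodD:
  assumes M: "is_rmodule M"
  shows "mzero M \<in> mcarrier M"
    "x \<in> mcarrier M \<Longrightarrow> y \<in> mcarrier M \<Longrightarrow> madd M x y \<in> mcarrier M"
    "x \<in> mcarrier M \<Longrightarrow> msmul M k x \<in> mcarrier M"
    "x \<in> mcarrier M \<Longrightarrow> y \<in> mcarrier M \<Longrightarrow> z \<in> mcarrier M \<Longrightarrow>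
       madd M (madd M x y) z = madd M x (madd M y z)"
    "x \<in> mcarrier M \<Longrightarrow> y \<in> mcarrier M \<Longrightarrow> madd M x y = madd M y x"
    "x \<in> mcarrier M \<Longrightarrow> madd M (mzero M) x = x"
    "x \<in> mcarrier M \<Longrightarrow> \<exists>y\<in>mcarrier M. madd M x y = mzero M"
    "x \<in> mcarrier M \<Longrightarrow> y \<in> mcarrier M \<Longrightarrow> msmul M k (madd M x y) = madd M (msmul M k x) (msmul M k y)"
    "x \<in> mcarrier M \<Longrightarrow> msmul M (k + l) x = madd M (msmul M k x) (msmul M l x)"
    "x \<in> mcarrier M \<Longrightarrow> msmul M (k * l) x = msmul M k (msmul M l x)"
    "x \<in> mcarrier M \<Longrightarrow> msmul M 1 x = x"
proof -
  note R = rmodD_all[OF M]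
  show "mzero M \<in> mcarrier M" by (rule R(1))
  show "x \<in> mcarrier M \<Longrightarrow> y \<in> mcarrier M \<Longrightarrow> madd M x y \<in> mcarrier M" using R(2) by blast
  show "x \<in> mcarrier M \<Longrightarrow> msmul M k x \<in> mcarrier M" using R(3) by blast
  show "x \<in> mcarrier M \<Longrightarrow> y \<in> mcarrier M \<Longrightarrow> z \<in> mcarrier M \<Longrightarrow>
       madd M (madd M x y) z = madd M x (madd M y z)" using R(4) by blast
  show "x \<in> mcarrier M \<Longrightarrow> y \<in> mcarrier M \<Longrightarrow> madd M x y = madd M y x" using R(5) by blast
  show "x \<in> mcarrier M \<Longrightarrow> madd M (mzero M) x = x" using R(6) by blast
  show "x \<in> mcarrier M \<Longrightarrow> \<exists>y\<in>mcarrier M. madd M x y = mzero M" using R(7) by blast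
  show "x \<in> mcarrier M \<Longrightarrow> y \<in> mcarrier M \<Longrightarrow> msmul M k (madd M x y) = madd M (msmul M k x) (msmul M k y)"
    using R(8) by blast
  show "x \<in> mcarrier M \<Longrightarrow> msmul M (k + l) x = madd M (msmul M k x) (msmul M l x)" using R(9) by blast
  show "x \<in> mcarrier M \<Longrightarrow> msmul M (k * l) x = msmul M k (msmul M l x)" using R(10) by blast
  show "x \<in> mcarrier M \<Longrightarrow> msmul M 1 x = x" using R(11) by blast
qed

lemma uniserial_chain:
  assumes U: "uniserial M" and x: "x \<in> mcarrier M" and y: "y \<in> mcarrier M"
  shows "(\<exists>k. y = msmul M k x) \<or> (\<exists>k. x = msmul M k y)"
proof -
  have M: "is_rmodule M" using U by (simp add: uniserial_def)
  have cyc: "is_submodule {msmul M k z | k. True} M" if z: "z \<in> mcarrier M" for z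
    unfolding is_submodule_def
  proof (intro conjI ballI allI)
    show "{msmul M k z | k. True} \<subseteq> mcarrier M" using rmodD(3)[OF M z] by blast
    have "msmul M 0 z = mzero M"
    proof -
      have "msmul M (0 + 0) z = madd M (msmul M 0 z) (msmul M 0 z)" using rmodD(9)[OF M z] .
      then have e: "msmul M 0 z = madd M (msmul M 0 z) (msmul M 0 z)" by simp
      have c0: "msmul M 0 z \<in> mcarrier M" using rmodD(3)[OF M z] .
      obtain w where w: "w \<in> mcarrier M" "madd M (msmul M 0 z) w = mzero M" using rmodD(7)[OF M c0] by blast
      have "mzero M = madd M (madd M (msmul M 0 z) (msmul M 0 z)) w" using e w by simp
      also have "\<dots> = madd M (msmul M 0 z) (madd M (msmul M 0 z) w)" using rmodD(4)[OF M c0 c0 w(1)] .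
      also have "\<dots> = madd M (msmul M 0 z) (mzero M)" using w by simp
      also have "\<dots> = madd M (mzero M) (msmul M 0 z)" using rmodD(5)[OF M c0 rmodD(1)[OF M]] .
      also have "\<dots> = msmul M 0 z" using rmodD(6)[OF M c0] .
      finally show ?thesis by simp
    qed
    then show "mzero M \<in> {msmul M k z | k. True}" by (metis (mono_tags, lifting) mem_Collect_eq)
  next
    fix a b assume "a \<in> {msmul M k z | k. True}" "b \<in> {msmul M k z | k. True}"
    then obtain k l where "a = msmul M k z" "b = msmul M l z" by blast
    then have "madd M a b = msmul M (k + l) z" using rmodD(9)[OF M z] by simp
    then show "madd M a b \<in> {msmul M k z | k. True}" by blast
  next
    fix c a assume "a \<in> {msmul M k z | k. True}"
    then obtain k where "a = msmul M k z" by blast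
    then have "msmul M c a = msmul M (c * k) z" using rmodD(10)[OF M z] by simp
    then show "msmul M c a \<in> {msmul M k z | k. True}" by blast
  qed
  have "{msmul M k x | k. True} \<subseteq> {msmul M k y | k. True} \<or> {msmul M k y | k. True} \<subseteq> {msmul M k x | k. True}"
    using U cyc[OF x] cyc[OF y] unfolding uniserial_def by blast
  moreover have "x = msmul M 1 x" "y = msmul M 1 y" using rmodD(11)[OF M] x y by auto
  ultimately show ?thesis by blast
qed

definition tr :: "('m \<Rightarrow> 'n) \<Rightarrow> ('a::comm_ring_1, 'm) rmod \<Rightarrow> ('a, 'n) rmod" where
  "tr h M = \<lparr> mcarrier = h ` mcarrier M,
     madd = (\<lambda>X Y. h (madd M (inv_into (mcarrier M) h X) (inv_into (mcarrier M) h Y))),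
     mzero = h (mzero M),
     msmul = (\<lambda>k X. h (msmul M k (inv_into (mcarrier M) h X))) \<rparr>"

context
  fixes h :: "'m \<Rightarrow> 'n" and M :: "('a::idom, 'm) rmod"
  assumes inj: "inj_on h (mcarrier M)"
begin

lemma tr_car: "mcarrier (tr h M) = h ` mcarrier M" by (simp add: tr_def)
lemma tr_zero: "mzero (tr h M) = h (mzero M)" by (simp add: tr_def)
lemma tr_add: "x \<in> mcarrier M \<Longrightarrow> y \<in> mcarrier M \<Longrightarrow> madd (tr h M) (h x) (h y) = h (madd M x y)"
  using inj by (simp add: tr_def)
lemma tr_smul: "x \<in> mcarrier M \<Longrightarrow> msmul (tr h M) k (h x) = h (msmul M k x)"
  using inj by (simp add: tr_def)
lemma tr_eq: "x \<in> mcarrier M \<Longrightarrow> y \<in> mcarrier M \<Longrightarrow> h x = h y \<longleftrightarrow> x = y"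
  using inj by (auto dest: inj_onD)

lemma tr_rmodule:
  assumes M: "is_rmodule M"
  shows "is_rmodule (tr h M)"
proof -
  note Md = rmodD[OF M]
  have z: "mzero M \<in> mcarrier M" using Md(1) .
  have ca: "\<And>x y. x \<in> mcarrier M \<Longrightarrow> y \<in> mcarrier M \<Longrightarrow> madd M x y \<in> mcarrier M" using Md(2) .
  have cs: "\<And>x k. x \<in> mcarrier M \<Longrightarrow> msmul M k x \<in> mcarrier M" using Md(3) .
  show ?thesis unfolding is_rmodule_def tr_car tr_zero
  proof (intro conjI ballI allI)
    show "h (mzero M) \<in> h ` mcarrier M" using z by blast
  next
    fix X Y assume "X \<in> h ` mcarrier M" "Y \<in> h ` mcarrier M"
    then obtain x y where "x \<in> mcarrier M" "y \<in> mcarrier M" "X = h x" "Y = h y" by blast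
    then show "madd (tr h M) X Y \<in> h ` mcarrier M" using tr_add ca by simp
  next
    fix k X assume "X \<in> h ` mcarrier M"
    then obtain x where "x \<in> mcarrier M" "X = h x" by blast
    then show "msmul (tr h M) k X \<in> h ` mcarrier M" using tr_smul cs by simp
  next
    fix X Y Z assume "X \<in> h ` mcarrier M" "Y \<in> h ` mcarrier M" "Z \<in> h ` mcarrier M"
    then obtain x y z where xyz: "x \<in> mcarrier M" "y \<in> mcarrier M" "z \<in> mcarrier M" "X = h x" "Y = h y" "Z = h z" by blast
    then show "madd (tr h M) (madd (tr h M) X Y) Z = madd (tr h M) X (madd (tr h M) Y Z)"
      using tr_add ca Md by simp
  next
    fix X Y assume "X \<in> h ` mcarrier M" "Y \<in> h ` mcarrier M"
    then obtain x y where "x \<in> mcarrier M" "y \<in> mcarrier M" "X = h x" "Y = h y" by blast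
    then show "madd (tr h M) X Y = madd (tr h M) Y X" using tr_add Md by simp
  next
    fix X assume "X \<in> h ` mcarrier M"
    then obtain x where "x \<in> mcarrier M" "X = h x" by blast
    then show "madd (tr h M) (h (mzero M)) X = X" using tr_add z Md by simp
  next
    fix X assume "X \<in> h ` mcarrier M"
    then obtain x where x: "x \<in> mcarrier M" "X = h x" by blast
    then obtain y where "y \<in> mcarrier M" "madd M x y = mzero M" using Md(7) by blast
    then show "\<exists>Y\<in>h ` mcarrier M. madd (tr h M) X Y = h (mzero M)" using x tr_add by (metis image_eqI)
  next
    fix k X Y assume "X \<in> h ` mcarrier M" "Y \<in> h ` mcarrier M"
    then obtain x y where "x \<in> mcarrier M" "y \<in> mcarrier M" "X = h x" "Y = h y" by blast
    then show "msmul (tr h M) k (madd (tr h M) X Y) = madd (tr h M) (msmul (tr h M) k X) (msmul (tr h M) k Y)"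
      using tr_add tr_smul ca cs Md by simp
  next
    fix k l X assume "X \<in> h ` mcarrier M"
    then obtain x where "x \<in> mcarrier M" "X = h x" by blast
    then show "msmul (tr h M) (k + l) X = madd (tr h M) (msmul (tr h M) k X) (msmul (tr h M) l X)"
      using tr_add tr_smul cs Md by simp
  next
    fix k l X assume "X \<in> h ` mcarrier M"
    then obtain x where "x \<in> mcarrier M" "X = h x" by blast
    then show "msmul (tr h M) (k * l) X = msmul (tr h M) k (msmul (tr h M) l X)"
      using tr_smul cs Md by simp
  next
    fix X assume "X \<in> h ` mcarrier M"
    then obtain x where "x \<in> mcarrier M" "X = h x" by blast
    then show "msmul (tr h M) 1 X = X" using tr_smul Md by simp
  qed
qed

lemma tr_uniserial:
  assumes U: "uniserial M"
  shows "uniserial (tr h M)"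
proof (rule uniserialI)
  show "is_rmodule (tr h M)" using tr_rmodule U by (simp add: uniserial_def)
next
  fix X Y assume "X \<in> mcarrier (tr h M)" "Y \<in> mcarrier (tr h M)"
  then obtain x y where xy: "x \<in> mcarrier M" "y \<in> mcarrier M" "X = h x" "Y = h y" by (auto simp: tr_car)
  from uniserial_chain[OF U xy(1,2)]
  show "(\<exists>k. Y = msmul (tr h M) k X) \<or> (\<exists>k. X = msmul (tr h M) k Y)"
    using xy tr_smul by auto
qed

lemma tr_has_type:
  assumes M: "is_rmodule M" and T: "has_type M J A"
  shows "has_type (tr h M) J A"
proof -
  obtain a where a: "a \<in> mcarrier M" "a \<noteq> mzero M" "rmod_iso (qmod J A) (qmod (Dset M a) (emb ` Ann M a))"
    using T unfolding has_type_def by blast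
  have z: "mzero M \<in> mcarrier M" using rmodD(1)[OF M] .
  have cs: "\<And>x k. x \<in> mcarrier M \<Longrightarrow> msmul M k x \<in> mcarrier M" using rmodD(3)[OF M] .
  have ann: "Ann (tr h M) (h a) = Ann M a"
    unfolding Ann_def using a(1) tr_smul tr_zero tr_eq[OF cs[OF a(1)] z] by auto
  have "\<And>k. (\<exists>b\<in>mcarrier (tr h M). msmul (tr h M) k b = h a) \<longleftrightarrow> (\<exists>b\<in>mcarrier M. msmul M k b = a)"
  proof
    fix k assume "\<exists>b\<in>mcarrier (tr h M). msmul (tr h M) k b = h a"
    then obtain b where "b \<in> mcarrier M" "msmul (tr h M) k (h b) = h a" by (auto simp: tr_car)
    then show "\<exists>b\<in>mcarrier M. msmul M k b = a" using tr_smul tr_eq cs a(1) by metis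
  next
    fix k assume "\<exists>b\<in>mcarrier M. msmul M k b = a"
    then obtain b where "b \<in> mcarrier M" "msmul M k b = a" by blast
    then show "\<exists>b\<in>mcarrier (tr h M). msmul (tr h M) k b = h a" using tr_smul by (auto simp: tr_car)
  qed
  then have dset: "Dset (tr h M) (h a) = Dset M a" unfolding Dset_def by simp
  have c1: "h a \<in> mcarrier (tr h M)" using a(1) by (simp add: tr_car)
  have c2: "h a \<noteq> mzero (tr h M)" using a(1,2) z tr_eq by (simp add: tr_zero)
  have c3: "rmod_iso (qmod J A) (qmod (Dset (tr h M) (h a)) (emb ` Ann (tr h M) (h a)))"
    unfolding ann dset by (rule a(3))
  show ?thesis unfolding has_type_def using c1 c2 c3 by blast
qed

lemma tr_standard:
  assumes "standard (tr h M)"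
  shows "standard M"
proof -
  obtain J A f where JA: "Q_submodule J" "Q_submodule A" "A \<subseteq> J"
    and bij: "bij_betw f (h ` mcarrier M) (mcarrier (qmod J A))"
    and ha: "\<forall>x\<in>h ` mcarrier M. \<forall>y\<in>h ` mcarrier M. f (madd (tr h M) x y) = madd (qmod J A) (f x) (f y)"
    and hs: "\<forall>r. \<forall>x\<in>h ` mcarrier M. f (msmul (tr h M) r x) = msmul (qmod J A) r (f x)"
    using assms unfolding standard_def rmod_iso_def tr_car by blast
  have b2: "bij_betw (f \<circ> h) (mcarrier M) (mcarrier (qmod J A))"
    using bij_betw_trans[OF inj_on_imp_bij_betw[OF inj] bij] .
  have "\<forall>x\<in>mcarrier M. \<forall>y\<in>mcarrier M. (f \<circ> h) (madd M x y) = madd (qmod J A) ((f \<circ> h) x) ((f \<circ> h) y)"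
    using ha tr_add by (metis comp_apply image_eqI)
  moreover have "\<forall>r. \<forall>x\<in>mcarrier M. (f \<circ> h) (msmul M r x) = msmul (qmod J A) r ((f \<circ> h) x)"
    using hs tr_smul by (metis comp_apply image_eqI)
  ultimately have "rmod_iso M (qmod J A)" unfolding rmod_iso_def using b2 by blast
  then show ?thesis unfolding standard_def using JA by blast
qed

end

lemma exists_inj_pair:
  assumes "infinite (UNIV :: 'a set)"
  shows "\<exists>f :: 'a \<times> 'a \<Rightarrow> 'a. inj f"
proof -
  have "(card_of ((UNIV :: 'a set) \<times> (UNIV :: 'a set)), card_of (UNIV :: 'a set)) \<in> ordIso"
    using card_of_Times_same_infinite[OF assms] .
  then obtain f where "bij_betw f ((UNIV :: 'a set) \<times> (UNIV :: 'a set)) (UNIV :: 'a set)"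
    using card_of_ordIso by blast
  then have "inj f" by (simp add: bij_betw_def)
  then show ?thesis by blast
qed

theorem theorem7:
  fixes r :: "'w::wellorder \<Rightarrow> 'a::idom"
    and N :: "'w \<Rightarrow> 'a set"
    and J A :: "'a fract set"
  assumes "valuation_domain TYPE('a)"
    and "not_field_of_fractions TYPE('a)"
    and "(card_of (UNIV :: 'a set), cardSuc natLeq) \<in> ordIso"
    and "omega1_type TYPE('w)"
    and "\<forall>v. r v \<noteq> 0"
    and "\<forall>m v. m < v \<longrightarrow> r m dvd r v"
    and "J = (\<Union>v. inv_R (r v))"
    and "Q_submodule A" and "A \<subseteq> J"
    and "omega1_filtration N r"
    and "nonzero_class (Eprime r N A)"
  shows "\<exists>U :: ('a, 'a fract set) rmod. uniserial U \<and> \<not> standard U \<and> has_type U J A"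
proof -
  note val = assms(1) and om = assms(4) and rnz = assms(5) and rdvd = assms(6) and Jdef = assms(7)
    and QA = assms(8) and filt = assms(10) and st = assms(11)
  interpret C: constr_setup r A N
    by unfold_locales (use val rnz rdvd QA filt om in auto)
  obtain b0 where b0: "1 / emb (r b0) \<notin> A" using C.exists_b0[OF st] by blast
  interpret B: umod_beta r A C.eF b0
  proof unfold_locales
    show "valuation_domain TYPE('a)" by (rule val)
    show "\<And>v. r v \<noteq> 0" using rnz by blast
    show "\<And>m v. m < v \<Longrightarrow> r m dvd r v" using rdvd by blast
    show "Q_submodule A" by (rule QA)
    show "\<And>m. C.eF m m = 1" by (rule C.eF_refl)
    show "\<And>m s. m \<le> s \<Longrightarrow> C.eF m s dvd 1" by (rule C.eF_unit)
    show "\<And>m k s. m \<le> k \<Longrightarrow> k \<le> s \<Longrightarrow> (emb (C.eF m k * C.eF k s) - emb (C.eF m s)) / emb (r m) \<in> A"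
      using C.eF_coh unfolding C.eqv_def by blast
    show "1 / emb (r b0) \<notin> A" by (rule b0)
  qed
  have Uuni: "uniserial B.Umod" by (rule B.Umod_uniserial)
  have Umod: "is_rmodule B.Umod" by (rule B.Umod_is_rmodule)
  have Utype: "has_type B.Umod J A" unfolding Jdef by (rule B.Umod_has_type)
  have Unstd: "\<not> standard B.Umod"
  proof
    assume "standard B.Umod"
    then obtain g where gu: "\<forall>m. g m dvd 1"
      and gt: "\<forall>m s. m < s \<longrightarrow> (emb (g m) - emb (C.eF m s * g s)) / emb (r m) \<in> A"
      using B.std_triv by blast
    have "\<forall>m s. m < s \<longrightarrow> C.eqv m (g m) (C.eF m s * g s)" using gt unfolding C.eqv_def by blast
    then show False using C.no_triv[OF st gu] by blast
  qed
  have rinj: "inj r"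
  proof (rule injI)
    fix v w assume eq: "r v = r w"
    show "v = w"
    proof (rule ccontr)
      assume "v \<noteq> w"
      then have "v < w \<or> w < v" by (meson linorder_neqE)
      then show False
      proof
        assume "v < w" then have "r v \<in> N w" using C.filt_r by blast
        then have "r w \<in> N w" using eq by simp
        then show False using C.filt_r by blast
      next
        assume "w < v" then have "r w \<in> N v" using C.filt_r by blast
        then have "r v \<in> N v" using eq by simp
        then show False using C.filt_r by blast
      qed
    qed
  qed
  have winf: "infinite (UNIV :: 'w set)"
    using om unfolding omega1_type_def using countable_finite by blast
  have ainf: "infinite (UNIV :: 'a set)"
  proof
    assume "finite (UNIV :: 'a set)"
    then have "finite (range r)" by (rule finite_subset[rotated]) simp
    then have "finite (UNIV :: 'w set)" using rinj finite_imageD by blast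
    then show False using winf by blast
  qed
  obtain f :: "'a \<times> 'a \<Rightarrow> 'a" where finj: "inj f" using exists_inj_pair[OF ainf] by blast
  define p where "p x = emb (f (r (fst x), snd x))" for x :: "'w \<times> 'a"
  have pinj: "inj p"
  proof (rule injI)
    fix x y assume "p x = p y"
    then have "f (r (fst x), snd x) = f (r (fst y), snd y)" by (simp add: p_def)
    then have "(r (fst x), snd x) = (r (fst y), snd y)" by (rule injD[OF finj])
    then have "fst x = fst y" "snd x = snd y" using rinj by (auto dest: injD)
    then show "x = y" by (simp add: prod_eq_iff)
  qed
  define h where "h X = p ` X" for X :: "('w \<times> 'a) set"
  have hinj: "inj_on h (mcarrier B.Umod)"
    unfolding h_def by (rule inj_onI) (simp add: inj_image_eq_iff[OF pinj])
  have "uniserial (tr h B.Umod)" by (rule tr_uniserial[OF hinj Uuni])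
  moreover have "\<not> standard (tr h B.Umod)" using tr_standard[OF hinj] Unstd by blast
  moreover have "has_type (tr h B.Umod) J A" by (rule tr_has_type[OF hinj Umod Utype])
  ultimately show ?thesis by blast
qed

end
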